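(* As $n\to\infty$: $\mathrm{sat}_\circlearrowright(n,F)=\Theta(n)$ for $F\in\{M_2,S_1,S_2\}$; $\mathrm{sat}_\circlearrowright(n,F)=\Theta(n^2)$ for $F\in\{M_1,M_3,D_1,D_2\}$; and $\mathrm{sat}_\circlearrowright(n,S_3)=\Omega(n)$ and $\mathrm{sat}_\circlearrowright(n,S_3)=O(n\log_2 n)$.
   Context: A convex geometric hypergraph (cgh) on $\Omega_n=\{v_0,\dots,v_{n-1}\}$ is a family of subsets (edges) of $\Omega_n$, where the vertices carry the cyclic order $v_0<v_1<\dots<v_{n-1}<v_0$ (indices mod $n$). It is a $3$-cgh if all edges have size $3$. For a cgh $F$, $H$ contains a copy of $F$ if there is an injection of the vertex set of $F$ into $\Omega_n$ preserving the cyclic order and mapping every edge of $F$ to an edge of $H$; $H$ is $F$-free if it contains no copy of $F$. $H\subseteq\binom{\Omega_n}{3}$ is $F$-saturated if it is $F$-free and for every $e\in\binom{\Omega_n}{3}\setminus H$, $H\cup\{e\}$ contains a copy of $F$. $\mathrm{sat}_\circlearrowright(n,F)$ is the minimum number of edges of an $F$-saturated $3$-cgh on $\Omega_n$. The following two-edge $3$-cghs are considered (each on the vertex set $\Omega_k$ with $k$ the number of vertices used): $M_1$: $\{v_0,v_1,v_2\},\{v_3,v_4,v_5\}$; $M_2$: $\{v_0,v_1,v_3\},\{v_2,v_4,v_5\}$; $M_3$: $\{v_0,v_2,v_4\},\{v_1,v_3,v_5\}$; $S_1$: $\{v_0,v_1,v_2\},\{v_0,v_3,v_4\}$; $S_2$: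 $\{v_0,v_1,v_4\},\{v_0,v_2,v_3\}$; $S_3$: $\{v_0,v_1,v_3\},\{v_0,v_2,v_4\}$; $D_1$: $\{v_0,v_1,v_2\},\{v_0,v_2,v_3\}$; $D_2$: $\{v_0,v_1,v_2\},\{v_0,v_1,v_3\}$. *)

theory Defs
  imports Main "HOL-Library.Landau_Symbols"
begin

text \<open>Vertices of \<Omega>_n are represented by 0..<n (v_i is i), with cyclic order
0 < 1 < ... < n-1 < 0.  A cgh is a set of vertex sets.\<close>

definition cyc :: "nat \<Rightarrow> nat \<Rightarrow> nat \<Rightarrow> bool" where
  "cyc a b c \<longleftrightarrow> (a < b \<and> b < c) \<or> (b < c \<and> c < a) \<or> (c < a \<and> a < b)"

definition cyc_embedding :: "nat \<Rightarrow> nat \<Rightarrow> (nat \<Rightarrow> nat) \<Rightarrow> bool" where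
  "cyc_embedding k n phi \<longleftrightarrow>
     inj_on phi {..<k} \<and> phi ` {..<k} \<subseteq> {..<n} \<and>
     (\<forall>a<k. \<forall>b<k. \<forall>c<k. cyc a b c \<longrightarrow> cyc (phi a) (phi b) (phi c))"

definition contains_copy :: "nat \<Rightarrow> nat set set \<Rightarrow> nat \<Rightarrow> nat set set \<Rightarrow> bool" where
  "contains_copy n H k F \<longleftrightarrow>
     (\<exists>phi. cyc_embedding k n phi \<and> (\<forall>e\<in>F. phi ` e \<in> H))"

definition triples :: "nat \<Rightarrow> nat set set" where
  "triples n = {e. e \<subseteq> {..<n} \<and> card e = 3}"

definition saturated :: "nat \<Rightarrow> nat \<Rightarrow> nat set set \<Rightarrow> nat set set \<Rightarrow> bool" where
  "saturated n k F H \<longleftrightarrow>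
     H \<subseteq> triples n \<and> \<not> contains_copy n H k F \<and>
     (\<forall>e\<in>triples n - H. contains_copy n (insert e H) k F)"

definition sat_cyc :: "nat \<Rightarrow> nat \<Rightarrow> nat set set \<Rightarrow> nat" where
  "sat_cyc n k F = (LEAST m. \<exists>H. saturated n k F H \<and> card H = m)"

definition M1 :: "nat set set" where "M1 = {{0,1,2},{3,4,5}}"
definition M2 :: "nat set set" where "M2 = {{0,1,3},{2,4,5}}"
definition M3 :: "nat set set" where "M3 = {{0,2,4},{1,3,5}}"
definition S1 :: "nat set set" where "S1 = {{0,1,2},{0,3,4}}"
definition S2 :: "nat set set" where "S2 = {{0,1,4},{0,2,3}}"
definition S3 :: "nat set set" where "S3 = {{0,1,3},{0,2,4}}"
definition D1 :: "nat set set" where "D1 = {{0,1,2},{0,2,3}}"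
definition D2 :: "nat set set" where "D2 = {{0,1,2},{0,1,3}}"

end

theory Submission
  imports Defs "HOL-Library.Log_Nat"
begin


lemma cyc_rot: "cyc a b c = cyc b c a" unfolding cyc_def by auto

lemma mod_add_small:
  fixes u d n :: nat
  assumes "u < n" "d < n"
  shows "(u + d) mod n = (if u + d < n then u + d else u + d - n)"
proof (cases "u + d < n")
  case True then show ?thesis by simp
next
  case False
  then have "u + d = (u + d - n) + n" by simp
  then have "(u + d) mod n = (u + d - n) mod n" by (metis mod_add_self2)
  also have "\<dots> = u + d - n" using assms False by simp
  finally show ?thesis using False by simp
qed

lemma cyc_mod3:
  fixes A B C n :: nat
  assumes "A < B" "B < C" "C < A + n"
  shows "cyc (A mod n) (B mod n) (C mod n)"
proof -
  have n: "n > 0" using assms by simp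
  define u where "u = A mod n"
  have u: "u < n" using n u_def by simp
  have B: "B mod n = (u + (B - A)) mod n" unfolding u_def
    by (metis assms(1) add_diff_inverse_nat less_imp_le_nat mod_add_left_eq not_less)
  have C: "C mod n = (u + (C - A)) mod n" unfolding u_def
    by (metis assms(1,2) add_diff_inverse_nat less_imp_le_nat mod_add_left_eq not_less less_trans)
  have B2: "B mod n = (if u + (B - A) < n then u + (B - A) else u + (B - A) - n)"
    using B mod_add_small[OF u, of "B - A"] assms by simp
  have C2: "C mod n = (if u + (C - A) < n then u + (C - A) else u + (C - A) - n)"
    using C mod_add_small[OF u, of "C - A"] assms by simp
  show ?thesis unfolding cyc_def B2 C2 u_def[symmetric] using assms u by auto
qed

lemma mod_inj_window:
  fixes A B n :: nat
  assumes "A < B" "B < A + n"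
  shows "A mod n \<noteq> B mod n"
proof
  assume h: "A mod n = B mod n"
  have "n dvd B - A"
    using h assms mod_eq_dvd_iff_nat[of A B n] by simp
  moreover have "0 < B - A" "B - A < n" using assms by auto
  ultimately show False using nat_dvd_not_less by blast
qed

lemma emb_list:
  assumes s: "sorted_wrt (<) xs" and ne: "xs \<noteq> []" and sp: "last xs < hd xs + n"
  shows "cyc_embedding (length xs) n (\<lambda>i. xs ! i mod n)"
proof -
  have lt: "xs ! i < xs ! j" if "i < j" "j < length xs" for i j
    using sorted_wrt_nth_less[OF s that] .
  have hd0: "hd xs = xs ! 0" using ne by (simp add: hd_conv_nth)
  have lastk: "last xs = xs ! (length xs - 1)" using ne by (simp add: last_conv_nth)
  have win: "xs ! j < xs ! i + n" if "i \<le> j" "j < length xs" for i j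
  proof -
    have "xs ! j \<le> last xs"
    proof (cases "j = length xs - 1")
      case True then show ?thesis using lastk by simp
    next
      case False
      then have "j < length xs - 1" using that by simp
      then have "xs ! j < xs ! (length xs - 1)" using lt[of j "length xs - 1"] that by simp
      then show ?thesis using lastk by simp
    qed
    moreover have "xs ! 0 \<le> xs ! i" using lt[of 0 i] that by (cases "i = 0") auto
    ultimately show ?thesis using sp hd0 by simp
  qed
  have n: "n > 0" using win[of 0 0] ne by simp
  have inj: "inj_on (\<lambda>i. xs ! i mod n) {..<length xs}"
  proof (rule inj_onI)
    fix i j assume "i \<in> {..<length xs}" "j \<in> {..<length xs}" "xs ! i mod n = xs ! j mod n"
    then show "i = j"
      using mod_inj_window[of "xs!i" "xs!j" n] mod_inj_window[of "xs!j" "xs!i" n]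
        lt[of i j] lt[of j i] win[of i j] win[of j i]
      by (metis lessThan_iff linorder_neqE_nat less_imp_le_nat)
  qed
  have cycs: "cyc (xs ! a mod n) (xs ! b mod n) (xs ! c mod n)"
    if "a < b" "b < c" "c < length xs" for a b c
    using cyc_mod3[of "xs!a" "xs!b" "xs!c" n] lt[of a b] lt[of b c] win[of a c] that by simp
  show ?thesis unfolding cyc_embedding_def
  proof (intro conjI inj allI impI)
    show "(\<lambda>i. xs ! i mod n) ` {..<length xs} \<subseteq> {..<n}" using n by auto
  next
    fix a b c assume h: "a < length xs" "b < length xs" "c < length xs" "cyc a b c"
    then have "(a < b \<and> b < c) \<or> (b < c \<and> c < a) \<or> (c < a \<and> a < b)" unfolding cyc_def by simp
    then show "cyc (xs ! a mod n) (xs ! b mod n) (xs ! c mod n)"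
      using cycs h cyc_rot by metis
  qed
qed

lemma Suc_n_mod [simp]: "2 \<le> n \<Longrightarrow> Suc n mod n = Suc 0"
  by (simp add: mod_Suc)
lemma Suc_Suc_n_mod [simp]: "3 \<le> n \<Longrightarrow> Suc (Suc n) mod n = 2"
  by (simp add: mod_Suc)
lemma Suc_Suc_Suc_n_mod [simp]: "4 \<le> n \<Longrightarrow> Suc (Suc (Suc n)) mod n = 3"
  by (simp add: mod_Suc)

lemma copy_list:
  assumes "sorted_wrt (<) xs" "xs \<noteq> []" "last xs < hd xs + n" "length xs = k"
    "\<forall>e\<in>F. (\<lambda>i. xs ! i mod n) ` e \<in> H"
  shows "contains_copy n H k F"
  unfolding contains_copy_def using emb_list[OF assms(1-3)] assms(4,5) by blast

lemma emb_cyc: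
  assumes "cyc_embedding k n phi" "a < k" "b < k" "c < k" "cyc a b c"
  shows "cyc (phi a) (phi b) (phi c)"
  using assms unfolding cyc_embedding_def by blast

lemma emb_lt: "cyc_embedding k n phi \<Longrightarrow> a < k \<Longrightarrow> phi a < n"
  unfolding cyc_embedding_def by auto

lemma emb_inj: "cyc_embedding k n phi \<Longrightarrow> a < k \<Longrightarrow> b < k \<Longrightarrow> a \<noteq> b \<Longrightarrow> phi a \<noteq> phi b"
  unfolding cyc_embedding_def inj_on_def by blast

lemma copy_split:
  assumes F: "F = {e1, e2}" "e1 \<noteq> e2" "e1 \<subseteq> {..<k}" "e2 \<subseteq> {..<k}"
    and c: "contains_copy n (insert t H) k F" and free: "\<not> contains_copy n H k F"
  shows "\<exists>phi. cyc_embedding k n phi \<and>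
     ((phi ` e1 = t \<and> phi ` e2 \<in> H) \<or> (phi ` e2 = t \<and> phi ` e1 \<in> H))"
proof -
  obtain phi where emb: "cyc_embedding k n phi" and im: "\<forall>e\<in>F. phi ` e \<in> insert t H"
    using c unfolding contains_copy_def by blast
  have inj: "inj_on phi {..<k}" using emb unfolding cyc_embedding_def by blast
  have ne: "phi ` e1 \<noteq> phi ` e2"
    using inj_on_image_eq_iff[OF inj F(3) F(4)] F(2) by blast
  have i1: "phi ` e1 \<in> insert t H" and i2: "phi ` e2 \<in> insert t H" using im F by auto
  have "\<not> (phi ` e1 \<in> H \<and> phi ` e2 \<in> H)"
    using free emb F(1) unfolding contains_copy_def by blast
  then show ?thesis using i1 i2 ne emb by blast
qed

lemma copy_mono: "contains_copy n A k F \<Longrightarrow> A \<subseteq> B \<Longrightarrow> contains_copy n B k F"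
  unfolding contains_copy_def by blast

lemma finite_triples: "finite (triples n)"
  unfolding triples_def by (rule finite_subset[of _ "Pow {..<n}"]) auto

lemma sat_exists_le:
  assumes G: "G \<subseteq> triples n" and free: "\<not> contains_copy n G k F"
    and comp: "\<forall>e\<in>triples n - (G \<union> S). contains_copy n (insert e G) k F"
  shows "\<exists>H. saturated n k F H \<and> card H \<le> card G + card (S \<inter> triples n)"
proof -
  define C where "C = {X. G \<subseteq> X \<and> X \<subseteq> G \<union> (S \<inter> triples n) \<and> \<not> contains_copy n X k F}"
  have fin: "finite (G \<union> (S \<inter> triples n))"
    using G finite_triples by (meson finite_Int finite_UnI finite_subset)
  have finC: "finite C" unfolding C_def
    by (rule finite_subset[of _ "Pow (G \<union> (S \<inter> triples n))"]) (use fin in auto)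
  have GC: "G \<in> C" unfolding C_def using free by auto
  have "Max (card ` C) \<in> card ` C" using finC GC by (intro Max_in) auto
  then obtain X where XC: "X \<in> C" and cX: "card X = Max (card ` C)" by auto
  have mx: "card Y \<le> card X" if "Y \<in> C" for Y
    using cX that finC by simp
  have Xsub: "G \<subseteq> X" "X \<subseteq> G \<union> (S \<inter> triples n)" and Xfree: "\<not> contains_copy n X k F"
    using XC unfolding C_def by auto
  have finX: "finite X" using Xsub(2) fin finite_subset by blast
  have "saturated n k F X"
    unfolding saturated_def
  proof (intro conjI ballI)
    show "X \<subseteq> triples n" using Xsub G by auto
    show "\<not> contains_copy n X k F" by (rule Xfree)
  next
    fix e assume e: "e \<in> triples n - X"
    show "contains_copy n (insert e X) k F"
    proof (cases "e \<in> S")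
      case True
      show ?thesis
      proof (rule ccontr)
        assume nc: "\<not> contains_copy n (insert e X) k F"
        have "insert e X \<in> C" unfolding C_def using Xsub e True nc by auto
        then have "card (insert e X) \<le> card X" by (rule mx)
        then show False using e finX by simp
      qed
    next
      case False
      then have "e \<in> triples n - (G \<union> S)" using e Xsub by auto
      then have "contains_copy n (insert e G) k F" using comp by blast
      then show ?thesis by (rule copy_mono) (use Xsub in auto)
    qed
  qed
  moreover have "card X \<le> card G + card (S \<inter> triples n)"
  proof -
    have "card X \<le> card (G \<union> (S \<inter> triples n))" using card_mono[OF fin Xsub(2)] .
    also have "\<dots> \<le> card G + card (S \<inter> triples n)" by (rule card_Un_le)
    finally show ?thesis .
  qed
  ultimately show ?thesis by blast
qed

lemma sat_le_card: "saturated n k F H \<Longrightarrow> sat_cyc n k F \<le> card H"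
  unfolding sat_cyc_def by (rule Least_le) blast

lemma sat_attained: "saturated n k F H \<Longrightarrow> \<exists>H'. saturated n k F H' \<and> sat_cyc n k F = card H'"
proof -
  assume "saturated n k F H"
  then have "\<exists>m H. saturated n k F H \<and> card H = m" by blast
  from LeastI_ex[OF this] show ?thesis unfolding sat_cyc_def by metis
qed

lemma sat_upper:
  assumes "G \<subseteq> triples n" "\<not> contains_copy n G k F"
    "\<forall>e\<in>triples n - (G \<union> S). contains_copy n (insert e G) k F"
  shows "sat_cyc n k F \<le> card G + card (S \<inter> triples n)"
  using sat_exists_le[OF assms] sat_le_card le_trans by blast

lemma sat_lower:
  assumes "G \<subseteq> triples n" "\<not> contains_copy n G k F"
    "\<forall>e\<in>triples n - (G \<union> S). contains_copy n (insert e G) k F"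
    and "\<And>H. saturated n k F H \<Longrightarrow> b \<le> card H"
  shows "b \<le> sat_cyc n k F"
  using sat_exists_le[OF assms(1-3)] sat_attained assms(4) by metis


lemma triple_sorted:
  assumes "e \<in> triples n"
  obtains x y z where "x < y" "y < z" "z < n" "e = {x,y,z}"
proof -
  have c: "card e = 3" and sub: "e \<subseteq> {..<n}" using assms unfolding triples_def by auto
  then obtain a b c where abc: "e = {a,b,c}" "a \<noteq> b" "a \<noteq> c" "b \<noteq> c"
    by (metis card_3_iff)
  have lt: "a < n" "b < n" "c < n" using sub abc by auto
  show ?thesis
  proof (cases "a < b")
    case True
    then show ?thesis
    proof (cases "b < c")
      case True then show ?thesis using that[of a b c] \<open>a<b\<close> lt abc by auto
    next
      case False
      then show ?thesis
      proof (cases "a < c")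
        case True then show ?thesis using that[of a c b] \<open>a<b\<close> False lt abc by (auto simp: insert_commute)
      next
        case False then show ?thesis using that[of c a b] \<open>a<b\<close> lt abc by (auto simp: insert_commute)
      qed
    qed
  next
    case False
    then show ?thesis
    proof (cases "a < c")
      case True then show ?thesis using that[of b a c] False lt abc by (auto simp: insert_commute)
    next
      case F2: False
      then show ?thesis
      proof (cases "b < c")
        case True then show ?thesis using that[of b c a] False F2 lt abc by (auto simp: insert_commute)
      next
        case False then show ?thesis using that[of c b a] \<open>\<not> a < b\<close> F2 lt abc by (auto simp: insert_commute)
      qed
    qed
  qed
qed

lemma triple_in: "x < y \<Longrightarrow> y < z \<Longrightarrow> z < n \<Longrightarrow> {x,y,z} \<in> triples n"
  unfolding triples_def by auto

lemma intersecting_free: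
  assumes "\<forall>a\<in>G. \<forall>b\<in>G. a \<inter> b \<noteq> {}" "F = {ea,eb}" "ea \<inter> eb = {}" "ea \<subseteq> {..<k}" "eb \<subseteq> {..<k}"
  shows "\<not> contains_copy n G k F"
proof
  assume "contains_copy n G k F"
  then obtain phi where emb: "cyc_embedding k n phi" and im: "phi ` ea \<in> G" "phi ` eb \<in> G"
    unfolding contains_copy_def using assms(2) by auto
  have "inj_on phi {..<k}" using emb unfolding cyc_embedding_def by blast
  then have "phi ` ea \<inter> phi ` eb = phi ` (ea \<inter> eb)"
    using assms(4,5) by (simp add: inj_on_image_Int)
  then show False using assms(1,3) im by auto
qed

lemma card_img_le: "card (f ` {..<(n::nat)}) \<le> n"
  using card_image_le[of "{..<n}" f] by simp

lemma card_img2_le: "card ((\<lambda>(a,b). f a b) ` ({..<(n::nat)} \<times> {..<n})) \<le> n * n"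
  using card_image_le[of "{..<n} \<times> {..<n}" "\<lambda>(a,b). f a b"] by (simp add: card_cartesian_product)

lemma M1_upper:
  assumes n: "6 \<le> n"
  shows "sat_cyc n 6 M1 \<le> n * n + 3 * n"
proof -
  define G where "G = {e \<in> triples n. 0 \<in> e}"
  define S where "S = (\<lambda>y. {1,y,n-1}) ` {..<n} \<union> (\<lambda>y. {1,y,n-2}) ` {..<n} \<union> (\<lambda>y. {2,y,n-1}) ` {..<n}"
  have G1: "G \<subseteq> triples n" unfolding G_def by auto
  have G2: "\<not> contains_copy n G 6 M1"
    by (rule intersecting_free[where ea="{0,1,2}" and eb="{3,4,5}"]) (auto simp: G_def M1_def)
  have G3: "\<forall>e\<in>triples n - (G \<union> S). contains_copy n (insert e G) 6 M1"
  proof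
    fix e assume e: "e \<in> triples n - (G \<union> S)"
    then obtain x y z where xyz: "x < y" "y < z" "z < n" "e = {x,y,z}"
      using triple_sorted by blast
    have x1: "1 \<le> x" using e xyz unfolding G_def by (cases x) auto
    have nS: "\<not> (x = 1 \<and> z = n - 1)" "\<not> (x = 1 \<and> z = n - 2)" "\<not> (x = 2 \<and> z = n - 1)"
      using e xyz unfolding S_def by (auto simp: insert_commute)
    have inG: "{a,b,c} \<in> G" if "a < b" "b < c" "c < n" "a = 0" for a b c
      unfolding G_def using triple_in[OF that(1-3)] that by auto
    consider "3 \<le> x" | "z + 3 \<le> n" | "x = 2" "z = n - 2"
      using x1 nS xyz n by linarith
    then show "contains_copy n (insert e G) 6 M1"
    proof cases
      case 1
      have "{0,1,2} \<in> G" using inG[of 0 1 2] n by simp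
      then show ?thesis
        by (intro copy_list[where xs="[0,1,2,x,y,z]"]) (use xyz 1 in \<open>auto simp: M1_def\<close>)
    next
      case 2
      have "{0,n-2,n-1} \<in> G" using inG[of 0 "n-2" "n-1"] n by simp
      then show ?thesis
        by (intro copy_list[where xs="[x,y,z,n-2,n-1,n]"]) (use xyz 2 x1 in \<open>auto simp: M1_def insert_commute\<close>)
    next
      case 3
      have "{0,1,n-1} \<in> G" using inG[of 0 1 "n-1"] n by simp
      then show ?thesis
        by (intro copy_list[where xs="[x,y,z,n-1,n,n+1]"]) (use xyz 3 n in \<open>auto simp: M1_def insert_commute\<close>)
    qed
  qed
  have cG: "card G \<le> n * n"
  proof -
    have "G \<subseteq> (\<lambda>(a,b). {0,a,b}) ` ({..<n} \<times> {..<n})"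
    proof
      fix e assume "e \<in> G"
      then obtain x y z where "x < y" "y < z" "z < n" "e = {x,y,z}" "0 \<in> e"
        unfolding G_def using triple_sorted by blast
      then have "x = 0" by auto
      then show "e \<in> (\<lambda>(a,b). {0,a,b}) ` ({..<n} \<times> {..<n})"
        using \<open>e = _\<close> \<open>y < z\<close> \<open>z < n\<close> by (auto intro!: image_eqI[where x="(y,z)"])
    qed
    then show ?thesis using card_img2_le[of "\<lambda>a b. {0,a,b}" n]
      by (meson card_mono finite_SigmaI finite_imageI finite_lessThan le_trans)
  qed
  have cS: "card (S \<inter> triples n) \<le> 3 * n"
  proof -
    have "card (S \<inter> triples n) \<le> card S" by (rule card_mono) (auto simp: S_def)
    also have "\<dots> \<le> n + n + n" unfolding S_def
      by (meson card_Un_le card_img_le add_mono le_trans)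
    finally show ?thesis by simp
  qed
  show ?thesis using sat_upper[OF G1 G2 G3] cG cS by linarith
qed


lemma card_Un3_le: "card (A \<union> B \<union> C) \<le> card A + card B + card C"
  using card_Un_le[of "A \<union> B" C] card_Un_le[of A B] by linarith

lemma card_S_le: "finite S \<Longrightarrow> card (S \<inter> triples n) \<le> card S"
  by (rule card_mono) auto

lemma M3_upper:
  assumes n: "6 \<le> n"
  shows "sat_cyc n 6 M3 \<le> n * n + n * n"
proof -
  define G where "G = {e \<in> triples n. 0 \<in> e}"
  define S where "S = (\<lambda>(i,y). {i,i+1,y}) ` ({..<n} \<times> {..<n})"
  have G1: "G \<subseteq> triples n" unfolding G_def by auto
  have G2: "\<not> contains_copy n G 6 M3"
    by (rule intersecting_free[where ea="{0,2,4}" and eb="{1,3,5}"]) (auto simp: G_def M3_def)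
  have G3: "\<forall>e\<in>triples n - (G \<union> S). contains_copy n (insert e G) 6 M3"
  proof
    fix e assume e: "e \<in> triples n - (G \<union> S)"
    then obtain x y z where xyz: "x < y" "y < z" "z < n" "e = {x,y,z}"
      using triple_sorted by blast
    have x1: "1 \<le> x" using e xyz unfolding G_def by (cases x) auto
    have a: "y \<noteq> x + 1"
    proof
      assume "y = x + 1"
      then have "e \<in> S" unfolding S_def using xyz by (auto intro!: image_eqI[where x="(x,z)"])
      then show False using e by blast
    qed
    have b: "z \<noteq> y + 1"
    proof
      assume "z = y + 1"
      then have "e \<in> S" unfolding S_def using xyz by (auto intro!: image_eqI[where x="(y,x)"] simp: insert_commute)
      then show False using e by blast
    qed
    have "{0,x+1,y+1} \<in> G" unfolding G_def using triple_in[of 0 "x+1" "y+1" n] xyz a b by auto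
    then show "contains_copy n (insert e G) 6 M3"
      by (intro copy_list[where xs="[0,x,x+1,y,y+1,z]"]) (use xyz a b x1 in \<open>auto simp: M3_def insert_commute\<close>)
  qed
  have cG: "card G \<le> n * n"
  proof -
    have "G \<subseteq> (\<lambda>(a,b). {0,a,b}) ` ({..<n} \<times> {..<n})"
    proof
      fix e assume "e \<in> G"
      then obtain x y z where "x < y" "y < z" "z < n" "e = {x,y,z}" "0 \<in> e"
        unfolding G_def using triple_sorted by blast
      then have "x = 0" by auto
      then show "e \<in> (\<lambda>(a,b). {0,a,b}) ` ({..<n} \<times> {..<n})"
        using \<open>e = _\<close> \<open>y < z\<close> \<open>z < n\<close> by (auto intro!: image_eqI[where x="(y,z)"])
    qed
    then show ?thesis using card_img2_le[of "\<lambda>a b. {0,a,b}" n]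
      by (meson card_mono finite_SigmaI finite_imageI finite_lessThan le_trans)
  qed
  have cS: "card (S \<inter> triples n) \<le> n * n"
    using card_S_le[of S n] card_img2_le[of "\<lambda>i y. {i,i+1,y}" n] unfolding S_def by auto
  show ?thesis using sat_upper[OF G1 G2 G3] cG cS by linarith
qed


lemma M2_c1b:
  assumes "x < y" "y < z" "z < n" "3 \<le> x" "y + 2 \<le> z" "{0,1,y+1} \<in> G"
  shows "contains_copy n (insert {x,y,z} G) 6 M2"
  by (intro copy_list[where xs="[x,y,y+1,z,n,n+1]"]) (use assms in \<open>auto simp: M2_def insert_commute\<close>)
lemma M2_c2a:
  assumes "0 < y" "y < z" "z < n" "3 \<le> y" "y + 2 \<le> z" "{1,2,y+1} \<in> G"
  shows "contains_copy n (insert {0,y,z} G) 6 M2"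
  by (intro copy_list[where xs="[1,2,y,y+1,z,n]"]) (use assms in \<open>auto simp: M2_def insert_commute\<close>)
lemma M2_c2b:
  assumes "3 \<le> y" "z = y + 1" "z + 1 < n" "{1,2,z+1} \<in> G"
  shows "contains_copy n (insert {0,y,z} G) 6 M2"
  by (intro copy_list[where xs="[y,z,z+1,n,n+1,n+2]"]) (use assms in \<open>auto simp: M2_def insert_commute\<close>)
lemma M2_c3a:
  assumes "4 \<le> y" "y < z" "z < n" "{0,2,3} \<in> G"
  shows "contains_copy n (insert {1,y,z} G) 6 M2"
  by (intro copy_list[where xs="[y,z,n,n+1,n+2,n+3]"]) (use assms in \<open>auto simp: M2_def insert_commute\<close>)
lemma M2_c3b:
  assumes "3 < z" "z + 1 < n" "{0,2,z+1} \<in> G"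
  shows "contains_copy n (insert {1,3,z} G) 6 M2"
  by (intro copy_list[where xs="[z+1,n,n+1,n+2,n+3,n+z]"]) (use assms in \<open>auto simp: M2_def insert_commute\<close>)
lemma M2_c4a:
  assumes "4 \<le> y" "y < z" "z < n" "{0,1,3} \<in> G"
  shows "contains_copy n (insert {2,y,z} G) 6 M2"
  by (intro copy_list[where xs="[0,1,2,3,y,z]"]) (use assms in \<open>auto simp: M2_def insert_commute\<close>)
lemma M2_c4b:
  assumes "5 \<le> z" "z < n" "{0,1,4} \<in> G"
  shows "contains_copy n (insert {2,3,z} G) 6 M2"
  by (intro copy_list[where xs="[2,3,4,z,n,n+1]"]) (use assms in \<open>auto simp: M2_def insert_commute\<close>)
lemma M2_upper:
  assumes n: "6 \<le> n"
  shows "sat_cyc n 6 M2 \<le> 3 * n + (n + 2)"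
proof -
  define G where "G = {e \<in> triples n. {0,1} \<subseteq> e \<or> {0,2} \<subseteq> e \<or> {1,2} \<subseteq> e}"
  define S where "S = (\<lambda>i. {i,i+1,i+2}) ` {..<n} \<union> {{0,n-2,n-1},{1,3,n-1}}"
  have G1: "G \<subseteq> triples n" unfolding G_def by auto
  have G2: "\<not> contains_copy n G 6 M2"
  proof (rule intersecting_free[where ea="{0,1,3}" and eb="{2,4,5}"])
    show "\<forall>a\<in>G. \<forall>b\<in>G. a \<inter> b \<noteq> {}" unfolding G_def by blast
  qed (auto simp: M2_def)
  have inG: "{a,b,c} \<in> G" if "a < b" "b < c" "c < n" "a \<le> 1" "b \<le> 2" for a b c
    unfolding G_def using triple_in[OF that(1-3)] that by auto
  have G3: "\<forall>e\<in>triples n - (G \<union> S). contains_copy n (insert e G) 6 M2"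
  proof
    fix e assume e: "e \<in> triples n - (G \<union> S)"
    then have et: "e \<in> triples n" and eG: "e \<notin> G" and eS: "e \<notin> S" by blast+
    obtain x y z where xyz: "x < y" "y < z" "z < n" "e = {x,y,z}"
      using triple_sorted[OF et] by blast
    have nG: "\<not> (x \<le> 1 \<and> y \<le> 2)"
    proof
      assume h: "x \<le> 1 \<and> y \<le> 2"
      have "e \<in> G" using inG[OF xyz(1-3)] h unfolding xyz(4) by blast
      then show False using eG by blast
    qed
    have nc: "\<not> (y = x + 1 \<and> z = x + 2)"
    proof
      assume h: "y = x + 1 \<and> z = x + 2"
      have "e = (\<lambda>i. {i,i+1,i+2}) x" using h xyz(4) by simp
      moreover have "x \<in> {..<n}" using xyz by simp
      ultimately have "e \<in> S" unfolding S_def by blast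
      then show False using eS by blast
    qed
    have ns1: "e \<noteq> {0,n-2,n-1}" "e \<noteq> {1,3,n-1}" using eS unfolding S_def by blast+
    consider "3 \<le> x" | "x = 0" | "x = 1" | "x = 2" by linarith
    then show "contains_copy n (insert e G) 6 M2"
    proof cases
      case 1
      show ?thesis
      proof (cases "x + 2 \<le> y")
        case True
        have "{0,1,x+1} \<in> G" using inG[of 0 1 "x+1"] xyz 1 by auto
        then show ?thesis unfolding xyz(4)
          by (intro copy_list[where xs="[0,1,x,x+1,y,z]"]) (use xyz 1 True in \<open>auto simp: M2_def\<close>)
      next
        case False
        then have "y + 2 \<le> z" using nc xyz by linarith
        moreover have "{0,1,y+1} \<in> G" using inG[of 0 1 "y+1"] xyz 1 \<open>y + 2 \<le> z\<close> by auto
        ultimately show ?thesis unfolding xyz(4) using M2_c1b xyz 1 by blast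
      qed
    next
      case 2
      then have y3: "3 \<le> y" using nG xyz by linarith
      show ?thesis
      proof (cases "y + 2 \<le> z")
        case True
        have "{1,2,y+1} \<in> G" using inG[of 1 2 "y+1"] xyz y3 True by auto
        then show ?thesis unfolding xyz(4) 2 using M2_c2a xyz y3 True by simp
      next
        case False
        then have zy: "z = y + 1" using xyz by linarith
        have "z + 1 \<noteq> n"
        proof
          assume "z + 1 = n"
          then have "e = {0,n-2,n-1}" using xyz 2 zy by auto
          then show False using ns1 by blast
        qed
        then have "z + 1 < n" using xyz by linarith
        then have "{1,2,z+1} \<in> G" using inG[of 1 2 "z+1"] xyz y3 by auto
        then show ?thesis unfolding xyz(4) 2 using M2_c2b y3 zy \<open>z + 1 < n\<close> by simp
      qed
    next
      case 3
      then have y3: "3 \<le> y" using nG xyz by linarith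
      show ?thesis
      proof (cases "4 \<le> y")
        case True
        have "{0,2,3} \<in> G" using inG[of 0 2 3] n by auto
        then show ?thesis unfolding xyz(4) 3 using M2_c3a True xyz by simp
      next
        case False
        then have y: "y = 3" using y3 by simp
        have "z + 1 \<noteq> n"
        proof
          assume "z + 1 = n"
          then have "e = {1,3,n-1}" using xyz 3 y by auto
          then show False using ns1 by blast
        qed
        then have "z + 1 < n" using xyz by linarith
        then have "{0,2,z+1} \<in> G" using inG[of 0 2 "z+1"] xyz y by auto
        then show ?thesis unfolding xyz(4) 3 y using M2_c3b \<open>z + 1 < n\<close> xyz y by simp
      qed
    next
      case 4
      show ?thesis
      proof (cases "4 \<le> y")
        case True
        have "{0,1,3} \<in> G" using inG[of 0 1 3] n by auto
        then show ?thesis unfolding xyz(4) 4 using M2_c4a True xyz by simp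
      next
        case False
        then have y: "y = 3" using xyz 4 by simp
        then have "5 \<le> z" using nc xyz 4 by auto
        have "{0,1,4} \<in> G" using inG[of 0 1 4] n by auto
        then show ?thesis unfolding xyz(4) 4 y using M2_c4b \<open>5 \<le> z\<close> xyz by simp
      qed
    qed
  qed
  have cG: "card G \<le> 3 * n"
  proof -
    have "G \<subseteq> (\<lambda>w. {0,1,w}) ` {..<n} \<union> (\<lambda>w. {0,2,w}) ` {..<n} \<union> (\<lambda>w. {1,2,w}) ` {..<n}"
    proof
      fix e assume eG: "e \<in> G"
      then have et: "e \<in> triples n" and h: "{0,1} \<subseteq> e \<or> {0,2} \<subseteq> e \<or> {1,2} \<subseteq> e"
        unfolding G_def by auto
      obtain x y z where xyz: "x < y" "y < z" "z < n" "e = {x,y,z}"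
        using triple_sorted[OF et] by blast
      obtain a b where ab: "a \<noteq> b" "a \<le> 2" "b \<le> 2" "a \<in> e" "b \<in> e"
      proof -
        consider "{0,1} \<subseteq> e" | "{0,2} \<subseteq> e" | "{1,2} \<subseteq> e" using h by blast
        then show ?thesis
        proof cases
          case 1 then show ?thesis using that[of 0 1] by simp
        next
          case 2 then show ?thesis using that[of 0 2] by simp
        next
          case 3 then show ?thesis using that[of 1 2] by simp
        qed
      qed
      have ab2: "(a = x \<or> a = y \<or> a = z) \<and> (b = x \<or> b = y \<or> b = z)" using ab xyz(4) by blast
      have y2: "y \<le> 2" using ab ab2 xyz by linarith
      have "(x = 0 \<and> y = 1) \<or> (x = 0 \<and> y = 2) \<or> (x = 1 \<and> y = 2)" using y2 xyz(1) by linarith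
      then show "e \<in> (\<lambda>w. {0,1,w}) ` {..<n} \<union> (\<lambda>w. {0,2,w}) ` {..<n} \<union> (\<lambda>w. {1,2,w}) ` {..<n}"
      proof (elim disjE conjE)
        assume "x = 0" "y = 1" then show ?thesis using xyz by (intro UnI1 image_eqI[where x=z]) auto
      next
        assume "x = 0" "y = 2" then show ?thesis using xyz by (intro UnI1 UnI2 image_eqI[where x=z]) auto
      next
        assume "x = 1" "y = 2" then show ?thesis using xyz by (intro UnI2 image_eqI[where x=z]) auto
      qed
    qed
    then have "card G \<le> card ((\<lambda>w. {0,1,w}) ` {..<n} \<union> (\<lambda>w. {0,2,w}) ` {..<n} \<union> (\<lambda>w. {1,2,w}) ` {..<n})"
      by (intro card_mono) auto
    also have "\<dots> \<le> n + n + n"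
      using card_Un3_le[of "(\<lambda>w. {0,1,w}) ` {..<n}" "(\<lambda>w. {0,2,w}) ` {..<n}" "(\<lambda>w. {1,2,w}) ` {..<n}"]
        card_img_le[of "\<lambda>w. {0,1,w}" n] card_img_le[of "\<lambda>w. {0,2,w}" n] card_img_le[of "\<lambda>w. {1,2,w}" n]
      by linarith
    finally show ?thesis by simp
  qed
  have cS: "card (S \<inter> triples n) \<le> n + 2"
  proof -
    have fS: "finite S" unfolding S_def by simp
    have "card (S \<inter> triples n) \<le> card S" by (rule card_S_le[OF fS])
    also have "\<dots> \<le> card ((\<lambda>i. {i,i+1,i+2}) ` {..<n}) + card {{0,n-2,n-1},{1::nat,3,n-1}}"
      unfolding S_def by (rule card_Un_le)
    also have "card {{0,n-2,n-1},{1::nat,3,n-1}} \<le> 2"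
      by (rule order_trans[OF card_insert_le_m1]) auto
    finally show ?thesis using card_img_le[of "\<lambda>i. {i,i+1,i+2}" n] by linarith
  qed
  show ?thesis using sat_upper[OF G1 G2 G3] cG cS by linarith
qed

lemma shared_one_free:
  assumes G: "\<forall>a\<in>G. \<forall>b\<in>G. a \<noteq> b \<longrightarrow> (\<exists>u w. u \<noteq> w \<and> u \<in> a \<and> w \<in> a \<and> u \<in> b \<and> w \<in> b)"
    and F: "F = {ea, eb}" "ea \<inter> eb = {v}" "ea \<noteq> eb" "ea \<subseteq> {..<k}" "eb \<subseteq> {..<k}"
  shows "\<not> contains_copy n G k F"
proof
  assume "contains_copy n G k F"
  then obtain phi where emb: "cyc_embedding k n phi" and im: "phi ` ea \<in> G" "phi ` eb \<in> G"
    unfolding contains_copy_def using F(1) by auto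
  have inj: "inj_on phi {..<k}" using emb unfolding cyc_embedding_def by blast
  have ne: "phi ` ea \<noteq> phi ` eb"
    using inj_on_image_eq_iff[OF inj F(4) F(5)] F(3) by blast
  have int: "phi ` ea \<inter> phi ` eb = {phi v}"
    using F(2) inj_on_image_Int[OF inj F(4) F(5)] by simp
  obtain u w where "u \<noteq> w" "u \<in> phi ` ea" "w \<in> phi ` ea" "u \<in> phi ` eb" "w \<in> phi ` eb"
    using G im ne by meson
  then show False using int by (metis IntI singletonD)
qed

definition GS :: "nat \<Rightarrow> nat set set" where
  "GS n = (\<lambda>j. {0,1,j}) ` {2..<n}"

lemma GS_sub: "GS n \<subseteq> triples n"
proof
  fix e assume "e \<in> GS n"
  then obtain j where "2 \<le> j" "j < n" "e = {0,1,j}" unfolding GS_def by auto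
  then show "e \<in> triples n" using triple_in[of 0 1 j n] by simp
qed

lemma GS_pairs: "\<forall>a\<in>GS n. \<forall>b\<in>GS n. a \<noteq> b \<longrightarrow> (\<exists>u w. u \<noteq> w \<and> u \<in> a \<and> w \<in> a \<and> u \<in> b \<and> w \<in> b)"
proof (intro ballI impI)
  fix a b assume "a \<in> GS n" "b \<in> GS n"
  then have "0 \<in> a" "1 \<in> a" "0 \<in> b" "1 \<in> b" unfolding GS_def by auto
  then show "\<exists>u w. u \<noteq> w \<and> u \<in> a \<and> w \<in> a \<and> u \<in> b \<and> w \<in> b" by (metis zero_neq_one)
qed

lemma GS_card: "card (GS n) \<le> n"
proof -
  have "card (GS n) \<le> card {2..<n}" unfolding GS_def by (rule card_image_le) simp
  then show ?thesis by simp
qed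

lemma img_mem: "e = f x \<Longrightarrow> x < (n::nat) \<Longrightarrow> e \<in> f ` {..<n}"
  by auto

lemma GS_mem: "2 \<le> j \<Longrightarrow> j < n \<Longrightarrow> {0,1,j} \<in> GS n"
  unfolding GS_def by auto
lemma S1_upper:
  assumes n: "6 \<le> n"
  shows "sat_cyc n 5 S1 \<le> n + 2 * n"
proof -
  define S where "S = (\<lambda>y. {1,y,n-1}) ` {..<n} \<union> (\<lambda>z. {0,2,z}) ` {..<n}"
  have G2: "\<not> contains_copy n (GS n) 5 S1"
    by (rule shared_one_free[OF GS_pairs, where ea="{0,1,2}" and eb="{0,3,4}" and v=0]) (auto simp: S1_def)
  have G3: "\<forall>e\<in>triples n - (GS n \<union> S). contains_copy n (insert e (GS n)) 5 S1"
  proof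
    fix e assume e: "e \<in> triples n - (GS n \<union> S)"
    then have et: "e \<in> triples n" and eG: "e \<notin> GS n" and eS: "e \<notin> S" by blast+
    obtain x y z where xyz: "x < y" "y < z" "z < n" "e = {x,y,z}"
      using triple_sorted[OF et] by blast
    consider "2 \<le> x" | "x = 0" | "x = 1" by linarith
    then show "contains_copy n (insert e (GS n)) 5 S1"
    proof cases
      case 1
      have "{0,1,x} \<in> GS n" using GS_mem[of x n] 1 xyz by simp
      then show ?thesis unfolding xyz(4)
        by (intro copy_list[where xs="[x,y,z,n,n+1]"]) (use xyz 1 in \<open>auto simp: S1_def insert_commute\<close>)
    next
      case 2
      have "y \<noteq> 1"
      proof
        assume "y = 1" then have "e \<in> GS n" using GS_mem[of z n] xyz 2 by simp
        then show False using eG by blast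
      qed
      moreover have "y \<noteq> 2"
      proof
        assume "y = 2" then have "e = (\<lambda>z. {0,2,z}) z" using xyz 2 by simp
        then have "e \<in> (\<lambda>z. {0,2,z}) ` {..<n}" using xyz by (intro img_mem[of e "\<lambda>z. {0,2,z}" z n]) simp_all
        then have "e \<in> S" unfolding S_def by blast
        then show False using eS by blast
      qed
      ultimately have y3: "3 \<le> y" using xyz 2 by linarith
      have "{0,1,2} \<in> GS n" using GS_mem[of 2 n] n by simp
      then show ?thesis unfolding xyz(4) 2
        by (intro copy_list[where xs="[0,1,2,y,z]"]) (use xyz y3 in \<open>auto simp: S1_def\<close>)
    next
      case 3
      have "z \<noteq> n - 1"
      proof
        assume "z = n - 1" then have "e = (\<lambda>y. {1,y,n-1}) y" using xyz 3 by simp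
        then have "e \<in> (\<lambda>y. {1,y,n-1}) ` {..<n}" using xyz by (intro img_mem[of e "\<lambda>y. {1,y,n-1}" y n]) simp_all
        then have "e \<in> S" unfolding S_def by blast
        then show False using eS by blast
      qed
      then have z: "z + 1 < n" using xyz by linarith
      have "{0,1,n-1} \<in> GS n" using GS_mem[of "n-1" n] n by simp
      then show ?thesis unfolding xyz(4) 3
        by (intro copy_list[where xs="[1,y,z,n-1,n]"]) (use xyz z 3 n in \<open>auto simp: S1_def insert_commute\<close>)
    qed
  qed
  have cS: "card (S \<inter> triples n) \<le> 2 * n"
  proof -
    have fS: "finite S" unfolding S_def by simp
    have "card (S \<inter> triples n) \<le> card S" by (rule card_S_le[OF fS])
    also have "\<dots> \<le> card ((\<lambda>y. {1,y,n-1}) ` {..<n}) + card ((\<lambda>z. {0::nat,2,z}) ` {..<n})"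
      unfolding S_def by (rule card_Un_le)
    finally show ?thesis using card_img_le[of "\<lambda>y. {1,y,n-1}" n] card_img_le[of "\<lambda>z. {0::nat,2,z}" n]
      by linarith
  qed
  show ?thesis using sat_upper[OF GS_sub G2 G3] GS_card[of n] cS by linarith
qed
lemma S2_upper:
  assumes n: "6 \<le> n"
  shows "sat_cyc n 5 S2 \<le> n + 2 * n"
proof -
  define S where "S = (\<lambda>y. {0,y,n-1}) ` {..<n} \<union> (\<lambda>z. {1,2,z}) ` {..<n}"
  have G2: "\<not> contains_copy n (GS n) 5 S2"
    by (rule shared_one_free[OF GS_pairs, where ea="{0,1,4}" and eb="{0,2,3}" and v=0]) (auto simp: S2_def)
  have G3: "\<forall>e\<in>triples n - (GS n \<union> S). contains_copy n (insert e (GS n)) 5 S2"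
  proof
    fix e assume e: "e \<in> triples n - (GS n \<union> S)"
    then have et: "e \<in> triples n" and eG: "e \<notin> GS n" and eS: "e \<notin> S" by blast+
    obtain x y z where xyz: "x < y" "y < z" "z < n" "e = {x,y,z}"
      using triple_sorted[OF et] by blast
    consider "2 \<le> x" | "x = 0" | "x = 1" by linarith
    then show "contains_copy n (insert e (GS n)) 5 S2"
    proof cases
      case 1
      have "{0,1,y} \<in> GS n" using GS_mem[of y n] 1 xyz by simp
      then show ?thesis unfolding xyz(4)
        by (intro copy_list[where xs="[y,z,n,n+1,n+x]"]) (use xyz 1 in \<open>auto simp: S2_def insert_commute\<close>)
    next
      case 2
      have "y \<noteq> 1"
      proof
        assume "y = 1" then have "e \<in> GS n" using GS_mem[of z n] xyz 2 by simp
        then show False using eG by blast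
      qed
      moreover have "z \<noteq> n - 1"
      proof
        assume "z = n - 1" then have "e = (\<lambda>y. {0,y,n-1}) y" using xyz 2 by simp
        then have "e \<in> (\<lambda>y. {0,y,n-1}) ` {..<n}" using xyz by (intro img_mem[of e "\<lambda>y. {0,y,n-1}" y n]) simp_all
        then have "e \<in> S" unfolding S_def by blast
        then show False using eS by blast
      qed
      ultimately have y2: "2 \<le> y" "z + 1 < n" using xyz 2 by linarith+
      have "{0,1,n-1} \<in> GS n" using GS_mem[of "n-1" n] n by simp
      then show ?thesis unfolding xyz(4) 2
        by (intro copy_list[where xs="[0,1,y,z,n-1]"]) (use xyz y2 in \<open>auto simp: S2_def insert_commute\<close>)
    next
      case 3
      have "y \<noteq> 2"
      proof
        assume "y = 2" then have "e = (\<lambda>z. {1,2,z}) z" using xyz 3 by simp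
        then have "e \<in> (\<lambda>z. {1,2,z}) ` {..<n}" using xyz by (intro img_mem[of e "\<lambda>z. {1,2,z}" z n]) simp_all
        then have "e \<in> S" unfolding S_def by blast
        then show False using eS by blast
      qed
      then have y3: "3 \<le> y" using xyz 3 by linarith
      have "{0,1,2} \<in> GS n" using GS_mem[of 2 n] n by simp
      then show ?thesis unfolding xyz(4) 3
        by (intro copy_list[where xs="[1,2,y,z,n]"]) (use xyz y3 3 n in \<open>auto simp: S2_def insert_commute\<close>)
    qed
  qed
  have cS: "card (S \<inter> triples n) \<le> 2 * n"
  proof -
    have fS: "finite S" unfolding S_def by simp
    have "card (S \<inter> triples n) \<le> card S" by (rule card_S_le[OF fS])
    also have "\<dots> \<le> card ((\<lambda>y. {0,y,n-1}) ` {..<n}) + card ((\<lambda>z. {1::nat,2,z}) ` {..<n})"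
      unfolding S_def by (rule card_Un_le)
    finally show ?thesis using card_img_le[of "\<lambda>y. {0,y,n-1}" n] card_img_le[of "\<lambda>z. {1::nat,2,z}" n]
      by linarith
  qed
  show ?thesis using sat_upper[OF GS_sub G2 G3] GS_card[of n] cS by linarith
qed


definition GD :: "nat \<Rightarrow> nat set set" where
  "GD n = {e \<in> triples n. \<exists>k b. e = {2*k, 2*k+1, b} \<and> 2*k+1 < b}"

lemma GD_mem: "2*k+1 < b \<Longrightarrow> b < n \<Longrightarrow> {2*k, 2*k+1, b} \<in> GD n"
  unfolding GD_def using triple_in[of "2*k" "2*k+1" b n] by auto

lemma GD_aux:
  fixes u k k' b b' :: nat
  assumes "u \<in> {2*k,2*k+1,b}" "u \<in> {2*k',2*k'+1,b'}" "k < k'" "2*k'+1 < b'"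
  shows "u = b"
proof -
  have "u \<ge> 2*k'" using assms(2,4) by auto
  then show ?thesis using assms(1,3) by auto
qed

lemma GD_free: "\<not> contains_copy n (GD n) 4 D1"
proof
  assume "contains_copy n (GD n) 4 D1"
  then obtain phi where emb: "cyc_embedding 4 n phi" and
    iA: "phi ` {0,1,2} \<in> GD n" and iB: "phi ` {0,2,3} \<in> GD n"
    unfolding contains_copy_def D1_def by auto
  define p0 where "p0 = phi 0"
  define p1 where "p1 = phi 1"
  define p2 where "p2 = phi 2"
  define p3 where "p3 = phi 3"
  have dist: "p0 \<noteq> p1" "p0 \<noteq> p2" "p0 \<noteq> p3" "p1 \<noteq> p2" "p1 \<noteq> p3" "p2 \<noteq> p3"
    unfolding p0_def p1_def p2_def p3_def using emb_inj[OF emb] by auto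
  have c1: "cyc p0 p1 p2" unfolding p0_def p1_def p2_def
    by (rule emb_cyc[OF emb]) (auto simp: cyc_def)
  have c2: "cyc p0 p2 p3" unfolding p0_def p3_def p2_def
    by (rule emb_cyc[OF emb]) (auto simp: cyc_def)
  have A: "{p0,p1,p2} \<in> GD n" using iA unfolding p0_def p1_def p2_def by simp
  have B: "{p0,p2,p3} \<in> GD n" using iB unfolding p0_def p3_def p2_def by simp
  obtain k b where kb: "{p0,p1,p2} = {2*k,2*k+1,b}" "2*k+1 < b" using A unfolding GD_def by blast
  obtain k' b' where kb': "{p0,p2,p3} = {2*k',2*k'+1,b'}" "2*k'+1 < b'" using B unfolding GD_def by blast
  have m0: "p0 \<in> {2*k,2*k+1,b}" "p2 \<in> {2*k,2*k+1,b}" "p1 \<in> {2*k,2*k+1,b}" using kb(1) by blast+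
  have m1: "p0 \<in> {2*k',2*k'+1,b'}" "p2 \<in> {2*k',2*k'+1,b'}" "p3 \<in> {2*k',2*k'+1,b'}" using kb'(1) by blast+
  have kk: "k = k'"
  proof (rule ccontr)
    assume "k \<noteq> k'"
    then consider "k < k'" | "k' < k" by linarith
    then show False
    proof cases
      case 1 then show False using GD_aux[OF m0(1) m1(1) _ kb'(2)] GD_aux[OF m0(2) m1(2) _ kb'(2)] dist(2) by simp
    next
      case 2 then show False using GD_aux[OF m1(1) m0(1) _ kb(2)] GD_aux[OF m1(2) m0(2) _ kb(2)] dist(2) by simp
    qed
  qed
  have bb: "b \<noteq> b'"
  proof
    assume "b = b'"
    then have "{p0,p1,p2} = {p0,p2,p3}" using kb(1) kb'(1) kk by simp
    then have "p1 \<in> {p0,p2,p3}" by (metis insertCI)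
    then show False using dist by simp
  qed
  have q: "p0 \<noteq> b" "p2 \<noteq> b" "p0 \<noteq> b'" "p2 \<noteq> b'"
    using m0(1,2) m1(1,2) bb kb(2) kb'(2) kk by auto
  have p1b: "p1 = b" using m0 q dist by auto
  have p3b: "p3 = b'" using m1 q dist by auto
  show False using c1 c2 p1b p3b m0(1,2) m1(1,2) q kb(2) kb'(2) kk unfolding cyc_def by auto
qed

lemma D1_upper:
  assumes n: "6 \<le> n"
  shows "sat_cyc n 4 D1 \<le> n * n"
proof -
  have G1: "GD n \<subseteq> triples n" unfolding GD_def by blast
  have G3: "\<forall>e\<in>triples n - (GD n \<union> {}). contains_copy n (insert e (GD n)) 4 D1"
  proof
    fix e assume e: "e \<in> triples n - (GD n \<union> {})"
    then have et: "e \<in> triples n" and eG: "e \<notin> GD n" by blast+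
    obtain x y z where xyz: "x < y" "y < z" "z < n" "e = {x,y,z}"
      using triple_sorted[OF et] by blast
    show "contains_copy n (insert e (GD n)) 4 D1"
    proof (cases "even x")
      case True
      then obtain k where k: "x = 2*k" by (rule evenE)
      have y: "y \<noteq> x + 1"
      proof
        assume "y = x + 1"
        then have "e \<in> GD n" using GD_mem[of k z n] xyz k by simp
        then show False using eG by blast
      qed
      have "{x,x+1,y} \<in> GD n" using GD_mem[of k y n] xyz k y by simp
      then show ?thesis unfolding xyz(4)
        by (intro copy_list[where xs="[x,x+1,y,z]"]) (use xyz y in \<open>auto simp: D1_def\<close>)
    next
      case False
      then obtain k where k: "x = 2*k+1" using oddE by blast
      have "{x-1,x,z} \<in> GD n" using GD_mem[of k z n] xyz k by simp
      then show ?thesis unfolding xyz(4)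
        by (intro copy_list[where xs="[x,y,z,n+x-1]"]) (use xyz k in \<open>auto simp: D1_def insert_commute\<close>)
    qed
  qed
  have cG: "card (GD n) \<le> n * n"
  proof -
    have "GD n \<subseteq> (\<lambda>(a,b). {2*(a div 2), 2*(a div 2)+1, b}) ` ({..<n} \<times> {..<n})"
    proof
      fix e assume "e \<in> GD n"
      then obtain k b where "e = {2*k,2*k+1,b}" "2*k+1 < b" "e \<in> triples n" unfolding GD_def by blast
      moreover then have "b < n" unfolding triples_def by auto
      ultimately show "e \<in> (\<lambda>(a,b). {2*(a div 2), 2*(a div 2)+1, b}) ` ({..<n} \<times> {..<n})"
        by (intro image_eqI[where x="(2*k,b)"]) auto
    qed
    then show ?thesis using card_img2_le[of "\<lambda>a b. {2*(a div 2), 2*(a div 2)+1, b}" n]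
      by (meson card_mono finite_SigmaI finite_imageI finite_lessThan le_trans)
  qed
  show ?thesis using sat_upper[OF G1 GD_free G3] cG by simp
qed

lemma D2_free_card:
  assumes H: "H \<subseteq> triples n" and free: "\<not> contains_copy n H 4 D2"
  shows "card H \<le> n * n"
proof -
  define key where "key e = (Min e, Min (e - {Min e}))" for e :: "nat set"
  have key3: "key {x,y,z} = (x,y)" if "x < y" "y < z" for x y z
  proof -
    have "Min {x,y,z} = x" using that by (simp add: min_def)
    moreover have "{x,y,z} - {x} = {y,z}" using that by auto
    moreover have "Min {y,z} = y" using that by simp
    ultimately show ?thesis unfolding key_def by simp
  qed
  have inj: "inj_on key H"
  proof (rule inj_onI)
    fix a b assume a: "a \<in> H" and b: "b \<in> H" and kab: "key a = key b"
    obtain x y z where xyz: "x < y" "y < z" "z < n" "a = {x,y,z}" using triple_sorted a H by blast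
    obtain x' y' z' where xyz': "x' < y'" "y' < z'" "z' < n" "b = {x',y',z'}" using triple_sorted b H by blast
    have "x' = x" "y' = y" using kab key3[of x y z] key3[of x' y' z'] xyz xyz' by auto
    show "a = b"
    proof (rule ccontr)
      assume "a \<noteq> b"
      then have "z \<noteq> z'" using xyz xyz' \<open>x' = x\<close> \<open>y' = y\<close> by auto
      then consider "z < z'" | "z' < z" by linarith
      then show False
      proof cases
        case 1
        have "contains_copy n H 4 D2"
          by (intro copy_list[where xs="[x,y,z,z']"]) (use xyz xyz' a b 1 \<open>x' = x\<close> \<open>y' = y\<close> in \<open>auto simp: D2_def\<close>)
        then show False using free by blast
      next
        case 2
        have "contains_copy n H 4 D2"
          by (intro copy_list[where xs="[x,y,z',z]"]) (use xyz xyz' a b 2 \<open>x' = x\<close> \<open>y' = y\<close> in \<open>auto simp: D2_def\<close>)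
        then show False using free by blast
      qed
    qed
  qed
  have "key ` H \<subseteq> {..<n} \<times> {..<n}"
  proof
    fix p assume "p \<in> key ` H"
    then obtain a where a: "a \<in> H" "p = key a" by blast
    obtain x y z where xyz: "x < y" "y < z" "z < n" "a = {x,y,z}" using triple_sorted a H by blast
    then show "p \<in> {..<n} \<times> {..<n}" using a key3 by auto
  qed
  then have "card (key ` H) \<le> n * n"
    using card_mono[of "{..<n} \<times> {..<n}" "key ` H"] by (simp add: card_cartesian_product)
  then show ?thesis using card_image[OF inj] by simp
qed

lemma D2_upper:
  shows "sat_cyc n 4 D2 \<le> n * n"
proof -
  have e: "\<not> contains_copy n {} 4 D2" unfolding contains_copy_def D2_def by auto
  obtain H where "saturated n 4 D2 H"
    using sat_exists_le[of "{}" n 4 D2 "triples n"] e by auto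
  moreover then have "card H \<le> n * n"
    using D2_free_card unfolding saturated_def by blast
  ultimately show ?thesis using sat_le_card le_trans by blast
qed

lemma sat_D: assumes "saturated n k F H"
  shows "H \<subseteq> triples n" "\<not> contains_copy n H k F"
    "\<And>e. e \<in> triples n \<Longrightarrow> e \<notin> H \<Longrightarrow> contains_copy n (insert e H) k F"
  using assms unfolding saturated_def by auto

lemma card_union_H:
  assumes "H \<subseteq> triples n"
  shows "card (\<Union>H) \<le> 3 * card H"
proof -
  have "card (\<Union>H) \<le> sum card H" by (rule card_Union_le_sum_card)
  also have "\<dots> = sum (\<lambda>_. 3) H"
    by (rule sum.cong) (use assms in \<open>auto simp: triples_def\<close>)
  also have "\<dots> = 3 * card H" by simp
  finally show ?thesis .
qed

lemma union_lt: "H \<subseteq> triples n \<Longrightarrow> \<Union>H \<subseteq> {..<n}"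
  unfolding triples_def by auto

lemma cyc_adj: "\<not> cyc a w (Suc a)"
  unfolding cyc_def by auto

lemma rot3:
  assumes "x < y" "y < z" "{p,q,r} = {x,y,z}" "p \<noteq> q" "p \<noteq> r" "q \<noteq> r" "cyc p q r"
  shows "(p = x \<and> q = y \<and> r = z) \<or> (p = y \<and> q = z \<and> r = x) \<or> (p = z \<and> q = x \<and> r = y)"
proof -
  have "p \<in> {x,y,z}" "q \<in> {x,y,z}" "r \<in> {x,y,z}" using assms(3) by blast+
  then have "(p = x \<and> q = y \<and> r = z) \<or> (p = y \<and> q = z \<and> r = x) \<or> (p = z \<and> q = x \<and> r = y) \<or>
     (p = x \<and> q = z \<and> r = y) \<or> (p = y \<and> q = x \<and> r = z) \<or> (p = z \<and> q = y \<and> r = x)"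
    using assms(4,5,6) by auto
  then show ?thesis using assms(1,2,7) unfolding cyc_def by auto
qed

lemma set_ne_wit: "a \<in> A \<Longrightarrow> a \<notin> B \<Longrightarrow> A \<noteq> B" by auto

lemma M2_facts: "M2 = {{0,1,3},{2,4,5}}" "{0::nat,1,3} \<noteq> {2,4,5}" "{0::nat,1,3} \<subseteq> {..<6}" "{2::nat,4,5} \<subseteq> {..<6}"
  by (auto simp: M2_def intro!: set_ne_wit[of 0])
lemma M3_facts: "M3 = {{0,2,4},{1,3,5}}" "{0::nat,2,4} \<noteq> {1,3,5}" "{0::nat,2,4} \<subseteq> {..<6}" "{1::nat,3,5} \<subseteq> {..<6}"
  by (auto simp: M3_def intro!: set_ne_wit[of 0])

lemma shared_lower:
  assumes F: "F = {ea, eb}" "v \<in> ea" "v \<in> eb" "ea \<noteq> eb" "ea \<subseteq> {..<k}" "eb \<subseteq> {..<k}"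
    and sat: "saturated n k F H"
  shows "n \<le> 3 * card H + 2"
proof (rule ccontr)
  assume "\<not> n \<le> 3 * card H + 2"
  then have big: "3 * card H + 3 \<le> n" by simp
  have Ht: "H \<subseteq> triples n" using sat_D(1)[OF sat] .
  have "card (\<Union>H) \<le> 3 * card H" by (rule card_union_H[OF Ht])
  moreover have "card ({..<n} - \<Union>H) = n - card (\<Union>H)"
    using union_lt[OF Ht] by (simp add: card_Diff_subset finite_subset)
  ultimately have "3 \<le> card ({..<n} - \<Union>H)" using big by linarith
  then obtain t where t: "t \<subseteq> {..<n} - \<Union>H" "card t = 3"
    by (meson obtain_subset_with_card_n)
  have tt: "t \<in> triples n" using t unfolding triples_def by auto
  have tH: "t \<notin> H"
  proof
    assume "t \<in> H"
    then have "t \<subseteq> \<Union>H" by blast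
    then have "t = {}" using t(1) by blast
    then show False using t(2) by simp
  qed
  obtain phi where emb: "cyc_embedding k n phi" and
    c: "(phi ` ea = t \<and> phi ` eb \<in> H) \<or> (phi ` eb = t \<and> phi ` ea \<in> H)"
    using copy_split[OF F(1,4,5,6) sat_D(3)[OF sat tt tH] sat_D(2)[OF sat]] by blast
  have "phi v \<in> t" "phi v \<in> \<Union>H" using c F(2,3) by blast+
  then show False using t(1) by blast
qed

lemma M2_lower:
  assumes sat: "saturated n 6 M2 H"
  shows "n div 3 \<le> 3 * card H"
proof -
  have Ht: "H \<subseteq> triples n" using sat_D(1)[OF sat] .
  define V where "V = \<Union>H"
  have nofree: "\<not> ({i, i+1, i+2} \<inter> V = {})" if "i + 2 < n" for i
  proof
    assume dis: "{i, i+1, i+2} \<inter> V = {}"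
    define t where "t = {i, i+1, i+2}"
    have tt: "t \<in> triples n" unfolding t_def using triple_in[of i "i+1" "i+2" n] that by simp
    have tH: "t \<notin> H"
    proof
      assume "t \<in> H" then have "i \<in> V" unfolding V_def t_def by blast
      then show False using dis by blast
    qed
    obtain phi where emb: "cyc_embedding 6 n phi" and
      c: "(phi ` {0,1,3} = t \<and> phi ` {2,4,5} \<in> H) \<or> (phi ` {2,4,5} = t \<and> phi ` {0,1,3} \<in> H)"
      using copy_split[OF M2_facts sat_D(3)[OF sat tt tH] sat_D(2)[OF sat]] by blast
    have d: "phi a \<noteq> phi b" if "a < 6" "b < 6" "a \<noteq> b" for a b using emb_inj[OF emb that] .
    have cy: "cyc (phi a) (phi b) (phi c)" if "a < 6" "b < 6" "c < 6" "cyc a b c" for a b c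
      using emb_cyc[OF emb that] .
    have lt: "i < i + 1" "i + 1 < i + 2" by simp_all
    from c show False
    proof
      assume h: "phi ` {0,1,3} = t \<and> phi ` {2,4,5} \<in> H"
      then have "{phi 0, phi 1, phi 3} = {i, i+1, i+2}" unfolding t_def by simp
      from rot3[OF lt this d[of 0 1] d[of 0 3] d[of 1 3] cy[of 0 1 3]]
      show False using cy[of 1 2 3] cy[of 3 4 0] cyc_adj
        by (auto simp: cyc_def) 
    next
      assume h: "phi ` {2,4,5} = t \<and> phi ` {0,1,3} \<in> H"
      then have "{phi 2, phi 4, phi 5} = {i, i+1, i+2}" unfolding t_def by simp
      from rot3[OF lt this d[of 2 4] d[of 2 5] d[of 4 5] cy[of 2 4 5]]
      show False using cy[of 2 3 4] cy[of 5 0 2] cyc_adj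
        by (auto simp: cyc_def) 
    qed
  qed
  have "n div 3 \<le> card V"
  proof -
    define g where "g q = (SOME v. v \<in> {3*q, 3*q+1, 3*q+2} \<inter> V)" for q
    have gq: "g q \<in> {3*q, 3*q+1, 3*q+2} \<inter> V" if "q < n div 3" for q
    proof -
      have "3*q + 2 < n" using that by linarith
      then have "{3*q, 3*q+1, 3*q+2} \<inter> V \<noteq> {}" using nofree[of "3*q"] by (simp add: add.assoc)
      then show ?thesis unfolding g_def by (meson ex_in_conv someI_ex)
    qed
    have inj: "inj_on g {..<n div 3}"
    proof (rule inj_onI)
      fix a b assume "a \<in> {..<n div 3}" "b \<in> {..<n div 3}" "g a = g b"
      then show "a = b" using gq[of a] gq[of b] by auto
    qed
    have "g ` {..<n div 3} \<subseteq> V" using gq by auto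
    moreover have "finite V" unfolding V_def using union_lt[OF Ht] finite_subset by blast
    ultimately have "card (g ` {..<n div 3}) \<le> card V" by (simp add: card_mono)
    then show ?thesis using card_image[OF inj] by simp
  qed
  then show ?thesis using card_union_H[OF Ht] unfolding V_def by linarith
qed

lemma M3_lower:
  assumes sat: "saturated n 6 M3 H"
  shows "(n div 2) * (n - n div 2 - 1) \<le> card H"
proof -
  have Ht: "H \<subseteq> triples n" using sat_D(1)[OF sat] .
  have inH: "{x, x+1, y} \<in> H" if "x + 1 < y" "y < n" for x y
  proof (rule ccontr)
    assume tH: "{x, x+1, y} \<notin> H"
    define t where "t = {x, x+1, y}"
    have tt: "t \<in> triples n" unfolding t_def using triple_in[of x "x+1" y n] that by simp
    obtain phi where emb: "cyc_embedding 6 n phi" and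
      c: "(phi ` {0,2,4} = t \<and> phi ` {1,3,5} \<in> H) \<or> (phi ` {1,3,5} = t \<and> phi ` {0,2,4} \<in> H)"
      using copy_split[OF M3_facts sat_D(3)[OF sat tt] sat_D(2)[OF sat]] tH unfolding t_def by blast
    have d: "phi a \<noteq> phi b" if "a < 6" "b < 6" "a \<noteq> b" for a b using emb_inj[OF emb that] .
    have cy: "cyc (phi a) (phi b) (phi c)" if "a < 6" "b < 6" "c < 6" "cyc a b c" for a b c
      using emb_cyc[OF emb that] .
    have lt: "x < x + 1" "x + 1 < y" using that by simp_all
    from c show False
    proof
      assume h: "phi ` {0,2,4} = t \<and> phi ` {1,3,5} \<in> H"
      then have "{phi 0, phi 2, phi 4} = {x, x+1, y}" unfolding t_def by simp
      from rot3[OF lt this d[of 0 2] d[of 0 4] d[of 2 4] cy[of 0 2 4]]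
      show False using cy[of 0 1 2] cy[of 2 3 4] cy[of 4 5 0] cyc_adj
        by (auto simp: cyc_def)
    next
      assume h: "phi ` {1,3,5} = t \<and> phi ` {0,2,4} \<in> H"
      then have "{phi 1, phi 3, phi 5} = {x, x+1, y}" unfolding t_def by simp
      from rot3[OF lt this d[of 1 3] d[of 1 5] d[of 3 5] cy[of 1 3 5]]
      show False using cy[of 1 2 3] cy[of 3 4 5] cy[of 5 0 1] cyc_adj
        by (auto simp: cyc_def)
    qed
  qed
  define q where "q = n div 2"
  define A where "A = {..<q} \<times> {q+1..<n}"
  define h where "h = (\<lambda>(x::nat,y::nat). {x, x+1, y})"
  have inj: "inj_on h A"
  proof (rule inj_onI)
    fix a b assume a: "a \<in> A" and b: "b \<in> A" and e: "h a = h b"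
    obtain x y where xy: "a = (x,y)" by (cases a)
    obtain x' y' where xy': "b = (x',y')" by (cases b)
    have lt: "x + 1 < y" "x' + 1 < y'" using a b xy xy' unfolding A_def by auto
    have e2: "{x, x+1, y} = {x', x'+1, y'}" using e xy xy' unfolding h_def by simp
    have "Min {x, x+1, y} = x" "Min {x', x'+1, y'} = x'" using lt by (simp_all add: min_def)
    then have "x = x'" using e2 by metis
    have "Max {x, x+1, y} = y" "Max {x', x'+1, y'} = y'" using lt by (simp_all add: max_def)
    then have "y = y'" using e2 by metis
    show "a = b" using xy xy' \<open>x = x'\<close> \<open>y = y'\<close> by simp
  qed
  have "h ` A \<subseteq> H" using inH unfolding h_def A_def by auto
  moreover have "finite H" using Ht finite_triples finite_subset by blast
  ultimately have "card (h ` A) \<le> card H" by (simp add: card_mono)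
  moreover have "card A = q * (n - q - 1)" unfolding A_def by (simp add: card_cartesian_product)
  ultimately show ?thesis using card_image[OF inj] unfolding q_def by simp
qed
lemma pair_lower:
  assumes F: "F = {ea, eb}" "ea \<noteq> eb" "ea \<subseteq> {..<k}" "eb \<subseteq> {..<k}"
    "u \<in> ea" "u \<in> eb" "w \<in> ea" "w \<in> eb" "u \<noteq> w"
    and sat: "saturated n k F H" and a: "a < n"
  shows "(n - (3 * card {e\<in>H. a \<in> e} + 1)) choose 2 \<le> 3 * card H"
proof -
  have Ht: "H \<subseteq> triples n" using sat_D(1)[OF sat] .
  have finH: "finite H" using Ht finite_triples finite_subset by blast
  define Ha where "Ha = {e\<in>H. a \<in> e}"
  define B where "B = insert a (\<Union>Ha)"
  have HaT: "Ha \<subseteq> triples n" using Ht unfolding Ha_def by auto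
  have finU: "finite (\<Union>Ha)" using union_lt[OF HaT] finite_subset by blast
  have "card B \<le> Suc (card (\<Union>Ha))" unfolding B_def using finU by (simp add: card_insert_if)
  then have cB: "card B \<le> 3 * card Ha + 1" using card_union_H[OF HaT] by linarith
  have finB: "finite B" unfolding B_def using finU by simp
  define W where "W = {..<n} - B"
  have cW: "n - (3 * card Ha + 1) \<le> card W"
    using diff_card_le_card_Diff[OF finB, of "{..<n}"] cB unfolding W_def by simp
  have finW: "finite W" unfolding W_def by simp
  define P where "P = {p. p \<subseteq> W \<and> card p = 2}"
  define Q where "Q = (\<Union>e\<in>H. {p. p \<subseteq> e \<and> card p = 2})"
  have cP: "card P = card W choose 2" unfolding P_def using n_subsets[OF finW] by simp
  have cQ: "card Q \<le> 3 * card H"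
  proof -
    have "card Q \<le> (\<Sum>e\<in>H. card {p. p \<subseteq> e \<and> card p = 2})" unfolding Q_def by (rule card_UN_le[OF finH])
    also have "\<dots> = (\<Sum>e\<in>H. 3)"
    proof (rule sum.cong)
      fix e assume "e \<in> H"
      then have "card e = 3" "finite e" using Ht unfolding triples_def by (auto intro: finite_subset)
      moreover have "(3::nat) choose 2 = 3" by (simp add: choose_two)
      ultimately show "card {p. p \<subseteq> e \<and> card p = 2} = 3" using n_subsets[of e 2] by simp
    qed simp
    finally show ?thesis by simp
  qed
  have PQ: "P \<subseteq> Q"
  proof
    fix p assume "p \<in> P"
    then have pW: "p \<subseteq> W" and "card p = 2" unfolding P_def by auto
    then obtain x y where xy: "p = {x,y}" "x \<noteq> y" by (meson card_2_iff)
    have xW: "x \<in> W" "y \<in> W" using pW xy by auto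
    then have xa: "x \<noteq> a" "y \<noteq> a" "x < n" "y < n" unfolding W_def B_def by auto
    define t where "t = {a,x,y}"
    have tt: "t \<in> triples n" unfolding t_def triples_def using xa xy a by auto
    have tH: "t \<notin> H"
    proof
      assume "t \<in> H" then have "t \<in> Ha" unfolding Ha_def t_def by simp
      then have "x \<in> B" unfolding B_def t_def by blast
      then show False using xW unfolding W_def by blast
    qed
    obtain phi where emb: "cyc_embedding k n phi" and
      c: "(phi ` ea = t \<and> phi ` eb \<in> H) \<or> (phi ` eb = t \<and> phi ` ea \<in> H)"
      using copy_split[OF F(1-4) sat_D(3)[OF sat tt tH] sat_D(2)[OF sat]] by blast
    obtain f where f: "f \<in> H" "phi u \<in> t" "phi w \<in> t" "phi u \<in> f" "phi w \<in> f"
      using c F(5-8) by blast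
    have uw: "phi u \<noteq> phi w" using emb_inj[OF emb] F by auto
    have af: "a \<notin> f"
    proof
      assume "a \<in> f"
      then have "f \<in> Ha" unfolding Ha_def using f by simp
      then have "f \<subseteq> B" unfolding B_def by blast
      then have "phi u \<in> B" "phi w \<in> B" using f by auto
      then have "phi u = a" "phi w = a" using f(2,3) xW unfolding t_def W_def by auto
      then show False using uw by simp
    qed
    have "phi u \<in> {x,y}" "phi w \<in> {x,y}" using f(2-5) af unfolding t_def by auto
    then have "{x,y} \<subseteq> f" using uw f(4,5) by auto
    then show "p \<in> Q" unfolding Q_def using f(1) xy by auto
  qed
  have finQ: "finite Q" unfolding Q_def
  proof (intro finite_UN_I[OF finH])
    fix e assume "e \<in> H"
    then have "finite e" using Ht unfolding triples_def by (auto intro: finite_subset)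
    then show "finite {p. p \<subseteq> e \<and> card p = 2}" by (rule finite_subset[rotated, OF finite_Pow_iff[THEN iffD2]]) auto
  qed
  have "card W choose 2 \<le> 3 * card H" using card_mono[OF finQ PQ] cP cQ by simp
  moreover have "(n - (3 * card Ha + 1)) choose 2 \<le> card W choose 2" by (rule binomial_right_mono[OF cW])
  ultimately show ?thesis unfolding Ha_def by simp
qed

lemma degree_sum:
  assumes Ht: "H \<subseteq> triples n"
  shows "(\<Sum>a<n. card {e\<in>H. a \<in> e}) = 3 * card H"
proof -
  have finH: "finite H" using Ht finite_triples finite_subset by blast
  have "(\<Sum>a<n. card {e\<in>H. a \<in> e}) = (\<Sum>a<n. \<Sum>e\<in>H. if a \<in> e then 1 else 0)"
  proof (rule sum.cong)
    fix a assume "a \<in> {..<n}"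
    have "(\<Sum>e\<in>H. if a \<in> e then 1 else (0::nat)) = card (H \<inter> {e. a \<in> e})"
      by (simp add: sum.If_cases finH)
    also have "H \<inter> {e. a \<in> e} = {e\<in>H. a \<in> e}" by auto
    finally show "card {e\<in>H. a \<in> e} = (\<Sum>e\<in>H. if a \<in> e then 1 else 0)" by simp
  qed simp
  also have "\<dots> = (\<Sum>e\<in>H. \<Sum>a<n. if a \<in> e then 1 else 0)" by (rule sum.swap)
  also have "\<dots> = (\<Sum>e\<in>H. 3)"
  proof (rule sum.cong)
    fix e assume "e \<in> H"
    then have e: "e \<subseteq> {..<n}" "card e = 3" using Ht unfolding triples_def by auto
    have "(\<Sum>a<n. if a \<in> e then 1 else (0::nat)) = card ({..<n} \<inter> e)"
      by (simp add: sum.If_cases)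
    also have "{..<n} \<inter> e = e" using e by auto
    finally show "(\<Sum>a<n. if a \<in> e then 1 else (0::nat)) = 3" using e by simp
  qed simp
  finally show ?thesis by simp
qed

lemma min_degree:
  assumes Ht: "H \<subseteq> triples n" and n: "0 < n"
  shows "\<exists>a<n. n * card {e\<in>H. a \<in> e} \<le> 3 * card H"
proof (rule ccontr)
  assume "\<not> ?thesis"
  then have h: "\<forall>a<n. 3 * card H < n * card {e\<in>H. a \<in> e}" by auto
  have "(\<Sum>a<n. 3 * card H) < (\<Sum>a<n. n * card {e\<in>H. a \<in> e})"
    by (rule sum_strict_mono) (use h n in auto)
  also have "\<dots> = n * (\<Sum>a<n. card {e\<in>H. a \<in> e})" by (rule sum_distrib_left[symmetric])
  also have "\<dots> = n * (3 * card H)" using degree_sum[OF Ht] by simp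
  finally show False by simp
qed

lemma final_arith:
  fixes n m d :: nat
  assumes n: "8 \<le> n" and h1: "n * d \<le> 3 * m" and h2: "(n - (3 * d + 1)) choose 2 \<le> 3 * m"
  shows "n * n \<le> 200 * m"
proof (rule ccontr)
  assume "\<not> ?thesis"
  then have c: "200 * m < n * n" by simp
  have "n * (200 * d) \<le> 600 * m" using h1 by (simp add: mult.commute mult.left_commute)
  also have "600 * m < n * (3 * n)" using c by simp
  finally have d: "200 * d < 3 * n" by (simp only: mult_less_cancel1)
  define w where "w = n - (3 * d + 1)"
  have w1: "n \<le> 2 * w" unfolding w_def using d n by linarith
  have w2: "n \<le> 4 * (w - 1)" using w1 n by linarith
  have "n * n \<le> (2 * w) * (4 * (w - 1))" using mult_le_mono[OF w1 w2] .
  then have A: "n * n \<le> 8 * (w * (w - 1))" by (simp add: algebra_simps)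
  have ev: "even (w * (w - 1))" by (cases w) simp_all
  have "w * (w - 1) = 2 * (w choose 2)"
    unfolding choose_two using ev by simp
  then have "w * (w - 1) \<le> 6 * m" using h2 unfolding w_def by simp
  then show False using A c by linarith
qed

lemma pair_lower_final:
  assumes F: "F = {ea, eb}" "ea \<noteq> eb" "ea \<subseteq> {..<k}" "eb \<subseteq> {..<k}"
    "u \<in> ea" "u \<in> eb" "w \<in> ea" "w \<in> eb" "u \<noteq> w"
    and sat: "saturated n k F H" and n: "8 \<le> n"
  shows "n * n \<le> 200 * card H"
proof -
  obtain a where a: "a < n" "n * card {e\<in>H. a \<in> e} \<le> 3 * card H"
    using min_degree[OF sat_D(1)[OF sat]] n by auto
  show ?thesis using final_arith[OF n a(2) pair_lower[OF F sat a(1)]] .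
qed

definition rotn :: "nat \<Rightarrow> nat \<Rightarrow> nat \<Rightarrow> nat" where
  "rotn n r x = (x + r) mod n"

lemma rotn_lt: "0 < n \<Longrightarrow> rotn n r x < n"
  unfolding rotn_def by simp

lemma rotn_eq: "x < n \<Longrightarrow> r < n \<Longrightarrow> rotn n r x = (if x + r < n then x + r else x + r - n)"
  unfolding rotn_def using mod_add_small by simp

lemma rotn_inj: "x < n \<Longrightarrow> y < n \<Longrightarrow> r < n \<Longrightarrow> rotn n r x = rotn n r y \<Longrightarrow> x = y"
  using rotn_eq[of x n r] rotn_eq[of y n r] by (auto split: if_splits)

lemma cyc_rotn: "x < n \<Longrightarrow> y < n \<Longrightarrow> z < n \<Longrightarrow> cyc x y z \<Longrightarrow>
    cyc (rotn n r x) (rotn n r y) (rotn n r z)"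
proof -
  assume a: "x < n" "y < n" "z < n" "cyc x y z"
  have g: "cyc (rotn n r p) (rotn n r q) (rotn n r w)" if "p < q" "q < w" "w < n" for p q w
    unfolding rotn_def by (rule cyc_mod3) (use that in auto)
  from a(4) consider "x < y" "y < z" | "y < z" "z < x" | "z < x" "x < y" unfolding cyc_def by auto
  then show ?thesis
  proof cases
    case 1 then show ?thesis using g a by blast
  next
    case 2 then show ?thesis using g[of y z x] a cyc_rot by metis
  next
    case 3 then show ?thesis using g[of z x y] a cyc_rot by metis
  qed
qed

lemma rotn_comp: "x < n \<Longrightarrow> (r + s) mod n = 0 \<Longrightarrow> rotn n s (rotn n r x) = x"
proof -
  assume x: "x < n" and rs: "(r + s) mod n = 0"
  have "rotn n s (rotn n r x) = ((x + r) mod n + s) mod n" unfolding rotn_def by simp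
  also have "\<dots> = (x + (r + s)) mod n" by (simp add: mod_add_left_eq add.assoc)
  also have "\<dots> = (x + (r + s) mod n) mod n" by (simp add: mod_add_right_eq)
  also have "\<dots> = x" using rs x by simp
  finally show ?thesis .
qed

definition rotH :: "nat \<Rightarrow> nat \<Rightarrow> nat set set \<Rightarrow> nat set set" where
  "rotH n r H = (\<lambda>e. rotn n r ` e) ` H"

lemma copy_rot:
  assumes c: "contains_copy n H k F" and r: "r < n"
  shows "contains_copy n (rotH n r H) k F"
proof -
  obtain phi where emb: "cyc_embedding k n phi" and im: "\<forall>e\<in>F. phi ` e \<in> H"
    using c unfolding contains_copy_def by blast
  have n: "0 < n" using r by simp
  have lt: "\<And>i. i < k \<Longrightarrow> phi i < n" using emb_lt[OF emb] .
  have emb2: "cyc_embedding k n (rotn n r \<circ> phi)"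
    unfolding cyc_embedding_def
  proof (intro conjI allI impI)
    show "inj_on (rotn n r \<circ> phi) {..<k}"
    proof (rule inj_onI)
      fix i j assume "i \<in> {..<k}" "j \<in> {..<k}" "(rotn n r \<circ> phi) i = (rotn n r \<circ> phi) j"
      then have "phi i = phi j" using rotn_inj[OF lt lt r] by auto
      then show "i = j" using emb_inj[OF emb] \<open>i \<in> _\<close> \<open>j \<in> _\<close> by blast
    qed
    show "(rotn n r \<circ> phi) ` {..<k} \<subseteq> {..<n}" using rotn_lt[OF n] by auto
  next
    fix a b c assume "a < k" "b < k" "c < k" "cyc a b c"
    then show "cyc ((rotn n r \<circ> phi) a) ((rotn n r \<circ> phi) b) ((rotn n r \<circ> phi) c)"
      using emb_cyc[OF emb] cyc_rotn[OF lt lt lt] by simp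
  qed
  have "\<forall>e\<in>F. (rotn n r \<circ> phi) ` e \<in> rotH n r H"
  proof
    fix e assume "e \<in> F"
    then have "phi ` e \<in> H" using im by blast
    then have "rotn n r ` (phi ` e) \<in> rotH n r H" unfolding rotH_def by (rule imageI)
    then show "(rotn n r \<circ> phi) ` e \<in> rotH n r H" by (simp add: image_comp)
  qed
  then show ?thesis using emb2 unfolding contains_copy_def by blast
qed

lemma rotH_back:
  assumes "H \<subseteq> triples n" "(r + s) mod n = 0"
  shows "rotH n s (rotH n r H) = H"
proof -
  have "(\<lambda>e. rotn n s ` (rotn n r ` e)) e = e" if "e \<in> H" for e
  proof -
    have "e \<subseteq> {..<n}" using that assms(1) unfolding triples_def by auto
    then show ?thesis using rotn_comp[OF _ assms(2)] by (force simp: image_comp)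
  qed
  then have "(\<lambda>e. rotn n s ` (rotn n r ` e)) ` H = (\<lambda>e. e) ` H" by (rule image_cong[OF refl])
  then show ?thesis unfolding rotH_def by (simp add: image_comp comp_def)
qed

lemma rot_triple:
  assumes "e \<in> triples n" "r < n"
  shows "rotn n r ` e \<in> triples n"
proof -
  have e: "e \<subseteq> {..<n}" "card e = 3" using assms unfolding triples_def by auto
  have "inj_on (rotn n r) e" using rotn_inj[OF _ _ assms(2)] e(1) unfolding inj_on_def by blast
  then have "card (rotn n r ` e) = 3" using e by (simp add: card_image)
  moreover have "rotn n r ` e \<subseteq> {..<n}" using rotn_lt assms(2) by auto
  ultimately show ?thesis unfolding triples_def by simp
qed

lemma sat_rot:
  assumes sat: "saturated n k F H" and r: "r < n"
  shows "saturated n k F (rotH n r H)"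
proof -
  define s where "s = (n - r) mod n"
  have n: "0 < n" using r by simp
  have s: "s < n" unfolding s_def using n by simp
  have rs: "(r + s) mod n = 0" "(s + r) mod n = 0" unfolding s_def using r
    by (metis add.commute add_diff_inverse_nat mod_add_right_eq mod_self not_less_iff_gr_or_eq)+
  have Ht: "H \<subseteq> triples n" using sat_D(1)[OF sat] .
  have H't: "rotH n r H \<subseteq> triples n" unfolding rotH_def using rot_triple[OF _ r] Ht by auto
  have bk: "rotH n s (rotH n r H) = H" using rotH_back[OF Ht rs(1)] .
  show ?thesis unfolding saturated_def
  proof (intro conjI ballI)
    show "rotH n r H \<subseteq> triples n" by (rule H't)
    show "\<not> contains_copy n (rotH n r H) k F"
    proof
      assume "contains_copy n (rotH n r H) k F"
      then have "contains_copy n (rotH n s (rotH n r H)) k F" using copy_rot s by blast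
      then show False using bk sat_D(2)[OF sat] by simp
    qed
  next
    fix e assume e: "e \<in> triples n - rotH n r H"
    define e' where "e' = rotn n s ` e"
    have e't: "e' \<in> triples n" unfolding e'_def using rot_triple[OF _ s] e by blast
    have ee: "rotn n r ` e' = e"
    proof -
      have "e \<subseteq> {..<n}" using e unfolding triples_def by auto
      then show ?thesis unfolding e'_def using rotn_comp[OF _ rs(2)] by (force simp: image_comp)
    qed
    have e'H: "e' \<notin> H"
    proof
      assume "e' \<in> H" then have "rotn n r ` e' \<in> rotH n r H" unfolding rotH_def by blast
      then show False using ee e by simp
    qed
    have "contains_copy n (rotH n r (insert e' H)) k F"
      using copy_rot[OF sat_D(3)[OF sat e't e'H] r] .
    moreover have "rotH n r (insert e' H) = insert e (rotH n r H)"
      unfolding rotH_def using ee by simp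
    ultimately show "contains_copy n (insert e (rotH n r H)) k F" by simp
  qed
qed

lemma M1_facts: "M1 = {{0,1,2},{3,4,5}}" "{0::nat,1,2} \<noteq> {3,4,5}" "{0::nat,1,2} \<subseteq> {..<6}" "{3::nat,4,5} \<subseteq> {..<6}"
  by (auto simp: M1_def intro!: set_ne_wit[of 0])

lemma arc_cases:
  fixes x y z w :: nat
  assumes "x < y" "y < z" "w < n"
  shows "cyc z w x \<Longrightarrow> w \<in> {z<..<n} \<union> {..<x}" "cyc x w y \<Longrightarrow> w \<in> {x<..<y}"
    "cyc y w z \<Longrightarrow> w \<in> {y<..<z}"
  using assms unfolding cyc_def by auto

lemma M1_arc:
  assumes sat: "saturated n 6 M1 H" and xyz: "x < y" "y < z" "z < n" and tH: "{x,y,z} \<notin> H"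
  shows "\<exists>f\<in>H. f \<subseteq> {x<..<y} \<or> f \<subseteq> {y<..<z} \<or> f \<subseteq> {z<..<n} \<union> {..<x}"
proof -
  have tt: "{x,y,z} \<in> triples n" using triple_in[OF xyz] .
  obtain phi where emb: "cyc_embedding 6 n phi" and
    c: "(phi ` {0,1,2} = {x,y,z} \<and> phi ` {3,4,5} \<in> H) \<or> (phi ` {3,4,5} = {x,y,z} \<and> phi ` {0,1,2} \<in> H)"
    using copy_split[OF M1_facts sat_D(3)[OF sat tt tH] sat_D(2)[OF sat]] by blast
  have d: "phi a \<noteq> phi b" if "a < 6" "b < 6" "a \<noteq> b" for a b using emb_inj[OF emb that] .
  have cy: "cyc (phi a) (phi b) (phi c)" if "a < 6" "b < 6" "c < 6" "cyc a b c" for a b c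
    using emb_cyc[OF emb that] .
  have lt: "phi a < n" if "a < 6" for a using emb_lt[OF emb that] .
  from c show ?thesis
  proof
    assume h: "phi ` {0,1,2} = {x,y,z} \<and> phi ` {3,4,5} \<in> H"
    then have eq: "{phi 0, phi 1, phi 2} = {x, y, z}" and fH: "{phi 3, phi 4, phi 5} \<in> H" by simp_all
    have cw: "cyc (phi 2) (phi i) (phi 0)" if "i \<in> {3,4,5}" for i
      using cy[of 2 i 0] that unfolding cyc_def by auto
    from rot3[OF xyz(1,2) eq d[of 0 1] d[of 0 2] d[of 1 2] cy[of 0 1 2]]
    consider "phi 0 = x" "phi 1 = y" "phi 2 = z" | "phi 0 = y" "phi 1 = z" "phi 2 = x"
      | "phi 0 = z" "phi 1 = x" "phi 2 = y" by (auto simp: cyc_def)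
    then show ?thesis
    proof cases
      case 1
      then have "{phi 3, phi 4, phi 5} \<subseteq> {z<..<n} \<union> {..<x}"
        using cw arc_cases(1)[OF xyz(1,2)] lt by auto
      then show ?thesis using fH by blast
    next
      case 2
      then have "{phi 3, phi 4, phi 5} \<subseteq> {x<..<y}"
        using cw arc_cases(2)[OF xyz(1,2)] lt by auto
      then show ?thesis using fH by blast
    next
      case 3
      then have "{phi 3, phi 4, phi 5} \<subseteq> {y<..<z}"
        using cw arc_cases(3)[OF xyz(1,2)] lt by auto
      then show ?thesis using fH by blast
    qed
  next
    assume h: "phi ` {3,4,5} = {x,y,z} \<and> phi ` {0,1,2} \<in> H"
    then have eq: "{phi 3, phi 4, phi 5} = {x, y, z}" and fH: "{phi 0, phi 1, phi 2} \<in> H" by simp_all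
    have cw: "cyc (phi 5) (phi i) (phi 3)" if "i \<in> {0,1,2}" for i
      using cy[of 5 i 3] that unfolding cyc_def by auto
    from rot3[OF xyz(1,2) eq d[of 3 4] d[of 3 5] d[of 4 5] cy[of 3 4 5]]
    consider "phi 3 = x" "phi 4 = y" "phi 5 = z" | "phi 3 = y" "phi 4 = z" "phi 5 = x"
      | "phi 3 = z" "phi 4 = x" "phi 5 = y" by (auto simp: cyc_def)
    then show ?thesis
    proof cases
      case 1
      then have "{phi 0, phi 1, phi 2} \<subseteq> {z<..<n} \<union> {..<x}"
        using cw arc_cases(1)[OF xyz(1,2)] lt by auto
      then show ?thesis using fH by blast
    next
      case 2
      then have "{phi 0, phi 1, phi 2} \<subseteq> {x<..<y}"
        using cw arc_cases(2)[OF xyz(1,2)] lt by auto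
      then show ?thesis using fH by blast
    next
      case 3
      then have "{phi 0, phi 1, phi 2} \<subseteq> {y<..<z}"
        using cw arc_cases(3)[OF xyz(1,2)] lt by auto
      then show ?thesis using fH by blast
    qed
  qed
qed

lemma sep_copy:
  assumes "f \<in> H" "g \<in> H" "f \<in> triples n" "g \<in> triples n" "\<forall>u\<in>g. \<forall>v\<in>f. u < v"
  shows "contains_copy n H 6 M1"
proof -
  obtain a b c where g: "a < b" "b < c" "c < n" "g = {a,b,c}" using triple_sorted[OF assms(4)] by blast
  obtain x y z where f: "x < y" "y < z" "z < n" "f = {x,y,z}" using triple_sorted[OF assms(3)] by blast
  have "c < x" using assms(5) f g by auto
  then show ?thesis
    by (intro copy_list[where xs="[a,b,c,x,y,z]"]) (use assms(1,2) f g in \<open>auto simp: M1_def\<close>)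
qed

lemma walk:
  fixes L R :: "nat \<Rightarrow> bool"
  assumes "\<forall>j. s \<le> j \<and> j \<le> e \<longrightarrow> L j \<or> R j" "\<not> L s" "\<not> R e" "s \<le> e"
  shows "\<exists>j. s \<le> j \<and> j < e \<and> R j \<and> L (Suc j)"
  using assms
proof (induction e)
  case 0 then show ?case by auto
next
  case (Suc e)
  show ?case
  proof (cases "s = Suc e")
    case True then show ?thesis using Suc.prems by auto
  next
    case False
    then have se: "s \<le> e" using Suc.prems by simp
    show ?thesis
    proof (cases "R e")
      case True
      have "L (Suc e)" using Suc.prems(1,3,4) by auto
      then show ?thesis using True se by auto
    next
      case False
      from Suc.IH[OF _ Suc.prems(2) False se] Suc.prems(1) show ?thesis by fastforce
    qed
  qed
qed
lemma empty_no_triple: "f \<in> triples n \<Longrightarrow> f \<subseteq> {} \<Longrightarrow> False"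
  unfolding triples_def by auto

lemma M1_cover_last:
  assumes sat: "saturated n 6 M1 H" and n: "4 \<le> n" and a: "a < n - 1"
  shows "\<exists>e\<in>H. a \<in> e \<and> n - 1 \<in> e"
proof (rule ccontr)
  assume nc: "\<not> ?thesis"
  define N where "N = n - 1"
  have Nn: "N < n" "a < N" unfolding N_def using n a by auto
  have Ht: "H \<subseteq> triples n" using sat_D(1)[OF sat] .
  have free: "\<not> contains_copy n H 6 M1" using sat_D(2)[OF sat] .
  have tH: "{p,q,N} \<notin> H" if "a = p \<or> a = q" for p q using nc that unfolding N_def by auto
  have sep: False if "f \<in> H" "g \<in> H" "\<forall>u\<in>g. \<forall>v\<in>f. u < v" for f g
    using sep_copy[OF that(1,2) _ _ that(3)] that(1,2) Ht free by blast
  define hasP where "hasP = (\<exists>f\<in>H. f \<subseteq> {..<a})"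
  define hasQ where "hasQ = (\<exists>f\<in>H. f \<subseteq> {a<..<N})"
  have notboth: "\<not> (hasP \<and> hasQ)"
  proof
    assume "hasP \<and> hasQ"
    then obtain f g where "g \<in> H" "g \<subseteq> {..<a}" "f \<in> H" "f \<subseteq> {a<..<N}"
      unfolding hasP_def hasQ_def by blast
    then show False using sep[of f g] by fastforce
  qed
  have noN: "{N<..<n} = {}" unfolding N_def by auto
  consider "\<not> hasP" "a + 1 < N" | "\<not> hasQ" "1 \<le> a"
  proof -
    have "hasP \<Longrightarrow> 1 \<le> a"
    proof -
      assume "hasP" then obtain f where "f \<in> H" "f \<subseteq> {..<a}" unfolding hasP_def by blast
      then show "1 \<le> a" using empty_no_triple[of f n] Ht by (cases a) auto
    qed
    moreover have "hasQ \<Longrightarrow> a + 1 < N"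
    proof -
      assume "hasQ" then obtain f where "f \<in> H" "f \<subseteq> {a<..<N}" unfolding hasQ_def by blast
      show "a + 1 < N"
      proof (rule ccontr)
        assume "\<not> a + 1 < N"
        then have "{a<..<N} = {}" by auto
        then show False using empty_no_triple[of f n] Ht \<open>f \<in> H\<close> \<open>f \<subseteq> {a<..<N}\<close> by auto
      qed
    qed
    moreover have "a + 1 < N \<or> 1 \<le> a" using Nn n unfolding N_def by linarith
    ultimately show ?thesis using that notboth by blast
  qed
  then show False
  proof cases
    case 1
    define L where "L j = (\<exists>f\<in>H. f \<subseteq> {a<..<j})" for j
    define R where "R j = (\<exists>f\<in>H. f \<subseteq> {j<..<N})" for j
    have LR: "\<forall>j. a + 1 \<le> j \<and> j \<le> N - 1 \<longrightarrow> L j \<or> R j"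
    proof (intro allI impI)
      fix j assume j: "a + 1 \<le> j \<and> j \<le> N - 1"
      then have aj: "a < j" "j < N" using 1 by auto
      from M1_arc[OF sat aj Nn(1) tH[of a j]] obtain f where
        f: "f \<in> H" "f \<subseteq> {a<..<j} \<or> f \<subseteq> {j<..<N} \<or> f \<subseteq> {N<..<n} \<union> {..<a}" by auto
      then show "L j \<or> R j" using 1(1) noN unfolding L_def R_def hasP_def by auto
    qed
    have nL: "\<not> L (a + 1)" unfolding L_def using empty_no_triple Ht by fastforce
    have nR: "\<not> R (N - 1)" unfolding R_def using empty_no_triple Ht by fastforce
    have le: "a + 1 \<le> N - 1" using 1 by linarith
    obtain j where j: "a + 1 \<le> j" "j < N - 1" "R j" "L (Suc j)"
      using walk[OF LR nL nR le] by blast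
    obtain f where "f \<in> H" "f \<subseteq> {j<..<N}" using j(3) unfolding R_def by blast
    moreover obtain g where "g \<in> H" "g \<subseteq> {a<..<Suc j}" using j(4) unfolding L_def by blast
    ultimately show False using sep[of f g] by fastforce
  next
    case 2
    define L where "L j = (\<exists>f\<in>H. f \<subseteq> {..<j})" for j
    define R where "R j = (\<exists>f\<in>H. f \<subseteq> {j<..<a})" for j
    have LR: "\<forall>j. 0 \<le> j \<and> j \<le> a - 1 \<longrightarrow> L j \<or> R j"
    proof (intro allI impI)
      fix j assume j: "0 \<le> j \<and> j \<le> a - 1"
      then have aj: "j < a" using 2 by auto
      from M1_arc[OF sat aj Nn(2) Nn(1) tH[of j a]] obtain f where
        f: "f \<in> H" "f \<subseteq> {j<..<a} \<or> f \<subseteq> {a<..<N} \<or> f \<subseteq> {N<..<n} \<union> {..<j}" by auto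
      then show "L j \<or> R j" using 2(1) noN unfolding L_def R_def hasQ_def by auto
    qed
    have nL: "\<not> L 0" unfolding L_def using empty_no_triple Ht by fastforce
    have nR: "\<not> R (a - 1)" unfolding R_def using empty_no_triple Ht 2 by fastforce
    obtain j where j: "j < a - 1" "R j" "L (Suc j)"
      using walk[OF LR nL nR] by auto
    obtain f where "f \<in> H" "f \<subseteq> {j<..<a}" using j(2) unfolding R_def by blast
    moreover obtain g where "g \<in> H" "g \<subseteq> {..<Suc j}" using j(3) unfolding L_def by blast
    ultimately show False using sep[of f g] by fastforce
  qed
qed

lemma M1_cover:
  assumes sat: "saturated n 6 M1 H" and n: "4 \<le> n" and ab: "a < b" "b < n"
  shows "\<exists>e\<in>H. a \<in> e \<and> b \<in> e"
proof -
  define r where "r = n - 1 - b"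
  have r: "r < n" unfolding r_def using n by simp
  have rb: "rotn n r b = n - 1" unfolding rotn_def r_def using ab n by simp
  have ra: "rotn n r a < n - 1" unfolding rotn_def r_def using ab n by simp
  obtain e' where e': "e' \<in> rotH n r H" "rotn n r a \<in> e'" "n - 1 \<in> e'"
    using M1_cover_last[OF sat_rot[OF sat r] n ra] by blast
  then obtain e where e: "e \<in> H" "e' = rotn n r ` e" unfolding rotH_def by blast
  have esub: "e \<subseteq> {..<n}" using e(1) sat_D(1)[OF sat] unfolding triples_def by auto
  have "rotn n r a \<in> rotn n r ` e" using e' e by simp
  then obtain a' where a': "a' \<in> e" "rotn n r a' = rotn n r a" by (metis imageE)
  have "rotn n r b \<in> rotn n r ` e" using e' e rb by simp
  then obtain b' where b': "b' \<in> e" "rotn n r b' = rotn n r b" by (metis imageE)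
  have "a' = a" using rotn_inj[of a' n a r] a' esub ab r by auto
  moreover have "b' = b" using rotn_inj[of b' n b r] b' esub ab r by auto
  ultimately show ?thesis using a' b' e by blast
qed

lemma M1_lower:
  assumes sat: "saturated n 6 M1 H" and n: "4 \<le> n"
  shows "n choose 2 \<le> 3 * card H"
proof -
  have Ht: "H \<subseteq> triples n" using sat_D(1)[OF sat] .
  have finH: "finite H" using Ht finite_triples finite_subset by blast
  define P where "P = {p. p \<subseteq> {..<n} \<and> card p = 2}"
  define Q where "Q = (\<Union>e\<in>H. {p. p \<subseteq> e \<and> card p = 2})"
  have cP: "card P = n choose 2" unfolding P_def using n_subsets[of "{..<n}" 2] by simp
  have cQ: "card Q \<le> 3 * card H"
  proof -
    have "card Q \<le> (\<Sum>e\<in>H. card {p. p \<subseteq> e \<and> card p = 2})" unfolding Q_def by (rule card_UN_le[OF finH])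
    also have "\<dots> = (\<Sum>e\<in>H. 3)"
    proof (rule sum.cong)
      fix e assume "e \<in> H"
      then have "card e = 3" "finite e" using Ht unfolding triples_def by (auto intro: finite_subset)
      moreover have "(3::nat) choose 2 = 3" by (simp add: choose_two)
      ultimately show "card {p. p \<subseteq> e \<and> card p = 2} = 3" using n_subsets[of e 2] by simp
    qed simp
    finally show ?thesis by simp
  qed
  have finQ: "finite Q" unfolding Q_def
  proof (intro finite_UN_I[OF finH])
    fix e assume "e \<in> H"
    then have "finite e" using Ht unfolding triples_def by (auto intro: finite_subset)
    then show "finite {p. p \<subseteq> e \<and> card p = 2}" by (rule finite_subset[rotated, OF finite_Pow_iff[THEN iffD2]]) auto
  qed
  have PQ: "P \<subseteq> Q"
  proof
    fix p assume "p \<in> P"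
    then have pn: "p \<subseteq> {..<n}" and "card p = 2" unfolding P_def by auto
    then obtain x y where xy: "p = {x,y}" "x \<noteq> y" by (meson card_2_iff)
    have lt: "x < n" "y < n" using pn xy by auto
    obtain e where e: "e \<in> H" "x \<in> e" "y \<in> e"
    proof (cases "x < y")
      case True then show ?thesis using M1_cover[OF sat n True lt(2)] that by blast
    next
      case False then have "y < x" using xy by simp
      then show ?thesis using M1_cover[OF sat n _ lt(1)] that by blast
    qed
    then show "p \<in> Q" unfolding Q_def using xy \<open>card p = 2\<close> by auto
  qed
  show ?thesis using card_mono[OF finQ PQ] cP cQ by simp
qed


function G3 :: "nat \<Rightarrow> nat \<Rightarrow> nat set set" where
  "G3 l s = (if s < 3 then {} else
      (\<lambda>j. {l, l + s div 2, j}) ` ({l<..<l+s} - {l + s div 2})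
      \<union> G3 (l+1) (s div 2 - 1) \<union> G3 (l + s div 2 + 1) (s - s div 2 - 1))"
  by pat_completeness auto
termination by (relation "measure (\<lambda>(l,s). s)") auto

function B3 :: "nat \<Rightarrow> nat \<Rightarrow> nat set set" where
  "B3 l s = (if s < 3 then {} else
      (\<lambda>y. {l, y, y+1}) ` {l..<l+s} \<union> (\<lambda>y. {l + s div 2, y, y+1}) ` {l..<l+s}
      \<union> {{l, l+1, l+s-1}, {l + s div 2 - 1, l + s div 2, l + s div 2 + 1}}
      \<union> B3 (l+1) (s div 2 - 1) \<union> B3 (l + s div 2 + 1) (s - s div 2 - 1))"
  by pat_completeness auto
termination by (relation "measure (\<lambda>(l,s). s)") auto

declare G3.simps[simp del] B3.simps[simp del]

lemma G3_small: "s < 3 \<Longrightarrow> G3 l s = {}" by (simp add: G3.simps)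
lemma B3_small: "s < 3 \<Longrightarrow> B3 l s = {}" by (simp add: B3.simps)
lemma G3_rec: "3 \<le> s \<Longrightarrow> G3 l s = (\<lambda>j. {l, l + s div 2, j}) ` ({l<..<l+s} - {l + s div 2})
      \<union> G3 (l+1) (s div 2 - 1) \<union> G3 (l + s div 2 + 1) (s - s div 2 - 1)"
  by (subst G3.simps) simp
lemma B3_rec: "3 \<le> s \<Longrightarrow> B3 l s = (\<lambda>y. {l, y, y+1}) ` {l..<l+s} \<union> (\<lambda>y. {l + s div 2, y, y+1}) ` {l..<l+s}
      \<union> {{l, l+1, l+s-1}, {l + s div 2 - 1, l + s div 2, l + s div 2 + 1}}
      \<union> B3 (l+1) (s div 2 - 1) \<union> B3 (l + s div 2 + 1) (s - s div 2 - 1)"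
  by (subst B3.simps) simp

lemma G3_range: "e \<in> G3 l s \<Longrightarrow> e \<subseteq> {l..<l+s}"
proof (induction s arbitrary: l e rule: less_induct)
  case (less s)
  show ?case
  proof (cases "s < 3")
    case True then show ?thesis using less.prems G3_small by simp
  next
    case False
    then have s3: "3 \<le> s" by simp
    have h1: "s div 2 - 1 < s" "s - s div 2 - 1 < s" using s3 by auto
    from less.prems[unfolded G3_rec[OF s3]] consider
      j where "e = {l, l + s div 2, j}" "j \<in> {l<..<l+s} - {l + s div 2}"
      | "e \<in> G3 (l+1) (s div 2 - 1)" | "e \<in> G3 (l + s div 2 + 1) (s - s div 2 - 1)" by blast
    then show ?thesis
    proof cases
      case 1 then show ?thesis using s3 by auto
    next
      case 2
      have "e \<subseteq> {l+1..<l+1+(s div 2 - 1)}" using less.IH[OF h1(1) 2] .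
      moreover have "{l+1..<l+1+(s div 2 - 1)} \<subseteq> {l..<l+s}" using s3 by auto
      ultimately show ?thesis by (rule order_trans)
    next
      case 3
      have "e \<subseteq> {l + s div 2 + 1..<l + s div 2 + 1 + (s - s div 2 - 1)}" using less.IH[OF h1(2) 3] .
      moreover have "{l + s div 2 + 1..<l + s div 2 + 1 + (s - s div 2 - 1)} \<subseteq> {l..<l+s}" using s3 by auto
      ultimately show ?thesis by (rule order_trans)
    qed
  qed
qed

lemma G3_top: "3 \<le> s \<Longrightarrow> l < j \<Longrightarrow> j < l + s \<Longrightarrow> j \<noteq> l + s div 2 \<Longrightarrow> {l, l + s div 2, j} \<in> G3 l s"
  by (subst G3_rec) auto

lemma G3_left: "3 \<le> s \<Longrightarrow> G3 (l+1) (s div 2 - 1) \<subseteq> G3 l s"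
  by (subst (2) G3_rec) auto
lemma G3_right: "3 \<le> s \<Longrightarrow> G3 (l + s div 2 + 1) (s - s div 2 - 1) \<subseteq> G3 l s"
  by (subst (2) G3_rec) auto
lemma B3_left: "3 \<le> s \<Longrightarrow> B3 (l+1) (s div 2 - 1) \<subseteq> B3 l s"
  by (subst (2) B3_rec) auto
lemma B3_right: "3 \<le> s \<Longrightarrow> B3 (l + s div 2 + 1) (s - s div 2 - 1) \<subseteq> B3 l s"
  by (subst (2) B3_rec) auto
lemma B3_a: "3 \<le> s \<Longrightarrow> l \<le> y \<Longrightarrow> y < l + s \<Longrightarrow> {l, y, y+1} \<in> B3 l s"
  by (subst B3_rec) auto
lemma B3_b: "3 \<le> s \<Longrightarrow> l \<le> y \<Longrightarrow> y < l + s \<Longrightarrow> {l + s div 2, y, y+1} \<in> B3 l s"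
  by (subst B3_rec) auto
lemma B3_c: "3 \<le> s \<Longrightarrow> {l, l+1, l+s-1} \<in> B3 l s"
  by (subst B3_rec) auto
lemma B3_d: "3 \<le> s \<Longrightarrow> {l + s div 2 - 1, l + s div 2, l + s div 2 + 1} \<in> B3 l s"
  by (subst B3_rec) auto

lemma card_bounds:
  "s < 2 ^ k \<Longrightarrow> card (G3 l s) \<le> s * k \<and> card (B3 l s) \<le> 4 * s * k"
proof (induction s arbitrary: l k rule: less_induct)
  case (less s)
  show ?case
  proof (cases "s < 3")
    case True then show ?thesis using G3_small B3_small by simp
  next
    case False
    then have s3: "3 \<le> s" by simp
    define s1 where "s1 = s div 2 - 1"
    define s2 where "s2 = s - s div 2 - 1"
    have k1: "1 \<le> k" using less.prems s3 by (cases k) auto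
    have "s div 2 < 2 ^ (k - 1)"
    proof -
      have "2 ^ k = 2 * (2::nat) ^ (k - 1)" using k1 by (cases k) auto
      then have "s < 2 * 2 ^ (k - 1)" using less.prems by simp
      then show ?thesis by linarith
    qed
    then have c1: "s1 < 2 ^ (k - 1)" "s2 < 2 ^ (k - 1)" unfolding s1_def s2_def by linarith+
    have lt: "s1 < s" "s2 < s" unfolding s1_def s2_def using s3 by auto
    have sum: "s1 + s2 = s - 2" unfolding s1_def s2_def using s3 by linarith
    have IH1: "card (G3 (l+1) s1) \<le> s1 * (k-1)" "card (B3 (l+1) s1) \<le> 4 * s1 * (k-1)"
      using less.IH[OF lt(1) c1(1)] by auto
    have IH2: "card (G3 (l + s div 2 + 1) s2) \<le> s2 * (k-1)" "card (B3 (l + s div 2 + 1) s2) \<le> 4 * s2 * (k-1)"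
      using less.IH[OF lt(2) c1(2)] by auto
    have T: "card ((\<lambda>j. {l, l + s div 2, j}) ` ({l<..<l+s} - {l + s div 2})) \<le> s"
    proof -
      have "card ((\<lambda>j. {l, l + s div 2, j}) ` ({l<..<l+s} - {l + s div 2})) \<le> card ({l<..<l+s} - {l + s div 2})"
        by (rule card_image_le) simp
      also have "\<dots> \<le> card {l<..<l+s}" by (rule card_mono) auto
      finally show ?thesis by simp
    qed
    have TB: "card ((\<lambda>y. {l, y, y+1}) ` {l..<l+s} \<union> (\<lambda>y. {l + s div 2, y, y+1}) ` {l..<l+s}
      \<union> {{l, l+1, l+s-1}, {l + s div 2 - 1, l + s div 2, l + s div 2 + 1}}) \<le> 4 * s"
    proof -
      have a: "card ((\<lambda>y. {l, y, y+1}) ` {l..<l+s}) \<le> s" using card_image_le[of "{l..<l+s}" "\<lambda>y. {l, y, y+1}"] by simp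
      have b: "card ((\<lambda>y. {l + s div 2, y, y+1}) ` {l..<l+s}) \<le> s" using card_image_le[of "{l..<l+s}" "\<lambda>y. {l + s div 2, y, y+1}"] by simp
      have c: "card {{l, l+1, l+s-1}, {l + s div 2 - 1, l + s div 2, l + s div 2 + 1}} \<le> 2"
        by (rule order_trans[OF card_insert_le_m1]) auto
      show ?thesis using card_Un3_le[of "(\<lambda>y. {l, y, y+1}) ` {l..<l+s}" "(\<lambda>y. {l + s div 2, y, y+1}) ` {l..<l+s}"
          "{{l, l+1, l+s-1}, {l + s div 2 - 1, l + s div 2, l + s div 2 + 1}}"] a b c s3 by linarith
    qed
    have "card (G3 l s) \<le> s + s1 * (k-1) + s2 * (k-1)"
      unfolding G3_rec[OF s3] s1_def[symmetric] s2_def[symmetric]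
      using card_Un3_le[of "(\<lambda>j. {l, l + s div 2, j}) ` ({l<..<l+s} - {l + s div 2})" "G3 (l+1) s1" "G3 (l + s div 2 + 1) s2"]
        T IH1(1) IH2(1) by linarith
    also have "\<dots> = s + (s1 + s2) * (k - 1)" by (simp only: add_mult_distrib add.assoc)
    also have "\<dots> \<le> s + s * (k - 1)" using sum by simp
    also have "\<dots> = s * k" using k1 by (cases k) (simp_all add: algebra_simps)
    finally have G: "card (G3 l s) \<le> s * k" .
    have U: "\<And>A B C D E :: nat set set. card (A \<union> B \<union> C \<union> D \<union> E) \<le> card (A \<union> B \<union> C) + card D + card E"
      by (meson card_Un_le add_le_mono1 le_trans)
    have "card (B3 l s) \<le> 4 * s + 4 * s1 * (k-1) + 4 * s2 * (k-1)"
      unfolding B3_rec[OF s3] s1_def[symmetric] s2_def[symmetric]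
      using U[of "(\<lambda>y. {l, y, y+1}) ` {l..<l+s}" "(\<lambda>y. {l + s div 2, y, y+1}) ` {l..<l+s}"
          "{{l, l+1, l+s-1}, {l + s div 2 - 1, l + s div 2, l + s div 2 + 1}}" "B3 (l+1) s1" "B3 (l + s div 2 + 1) s2"]
        TB IH1(2) IH2(2) by linarith
    also have "\<dots> = 4 * s + 4 * (s1 + s2) * (k - 1)" by (simp only: add_mult_distrib add_mult_distrib2 mult.assoc add.assoc)
    also have "\<dots> \<le> 4 * s + 4 * s * (k - 1)" using sum by simp
    also have "\<dots> = 4 * s * k" using k1 by (cases k) (simp_all add: algebra_simps)
    finally show ?thesis using G by simp
  qed
qed


definition Pc :: "nat set \<Rightarrow> nat set \<Rightarrow> bool" where
  "Pc e1 e2 = (\<exists>v a b c d. e1 = {v,a,b} \<and> e2 = {v,c,d} \<and> distinct [v,a,b,c,d] \<and> cyc a c b \<and> cyc b d a)"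

lemma S3_copy_P:
  assumes "contains_copy n H 5 S3"
  shows "\<exists>e1\<in>H. \<exists>e2\<in>H. Pc e1 e2"
proof -
  obtain phi where emb: "cyc_embedding 5 n phi" and im: "{phi 0, phi 1, phi 3} \<in> H" "{phi 0, phi 2, phi 4} \<in> H"
    using assms unfolding contains_copy_def S3_def by auto
  have d: "phi a \<noteq> phi b" if "a < 5" "b < 5" "a \<noteq> b" for a b using emb_inj[OF emb that] .
  have "cyc (phi 1) (phi 2) (phi 3)" "cyc (phi 3) (phi 4) (phi 1)"
    using emb_cyc[OF emb, of 1 2 3] emb_cyc[OF emb, of 3 4 1] unfolding cyc_def by auto
  moreover have "distinct [phi 0, phi 1, phi 3, phi 2, phi 4]" using d by auto
  ultimately have "Pc {phi 0, phi 1, phi 3} {phi 0, phi 2, phi 4}" unfolding Pc_def by blast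
  then show ?thesis using im by blast
qed

lemma Pc_TT:
  assumes "Pc e1 e2" "l \<in> e1" "m \<in> e1" "l \<in> e2" "m \<in> e2"
  shows "l = m"
  using assms unfolding Pc_def by auto

lemma Pc_disj:
  assumes "Pc e1 e2" shows "e1 \<inter> e2 \<noteq> {}"
  using assms unfolding Pc_def by auto

lemma Pc_T_child:
  assumes P: "Pc e1 e2" and e1: "e1 = {l, m, j}" and lm: "l < m" and
    e2: "e2 \<subseteq> {l<..<m} \<or> e2 \<subseteq> {m<..<u}" and mu: "m < u" and jr: "j < u" "l < j"
  shows False
proof -
  obtain v a b c d where h: "e1 = {v,a,b}" "e2 = {v,c,d}" "distinct [v,a,b,c,d]" "cyc a c b" "cyc b d a"
    using P unfolding Pc_def by blast
  have vin: "v \<in> e2" "c \<in> e2" "d \<in> e2" using h by auto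
  have "v \<noteq> l" "v \<noteq> m" using vin(1) e2 lm by auto
  then have vj: "v = j" using h(1) e1 by auto
  have ab: "a \<in> {l,m}" "b \<in> {l,m}" using h(1,3) e1 vj by auto
  have c1: "(a = l \<and> b = m) \<or> (a = m \<and> b = l)" using ab h(3) by auto
  have c2: "(l < c \<and> c < m \<and> l < d \<and> d < m) \<or> (m < c \<and> c < u \<and> m < d \<and> d < u)"
    using e2 vin(2,3) by auto
  from c1 c2 show False using h(4,5) lm unfolding cyc_def by (elim disjE conjE; linarith)
qed

lemma Pc_child_T:
  assumes P: "Pc e1 e2" and e2: "e2 = {l, m, j}" and lm: "l < m" and
    e1: "e1 \<subseteq> {l<..<m} \<or> e1 \<subseteq> {m<..<u}" and mu: "m < u" and jr: "j < u" "l < j"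
  shows False
proof -
  obtain v a b c d where h: "e1 = {v,a,b}" "e2 = {v,c,d}" "distinct [v,a,b,c,d]" "cyc a c b" "cyc b d a"
    using P unfolding Pc_def by blast
  have vin: "v \<in> e1" "a \<in> e1" "b \<in> e1" using h by auto
  have "v \<noteq> l" "v \<noteq> m" using vin(1) e1 lm by auto
  then have vj: "v = j" using h(2) e2 by auto
  have cd: "c \<in> {l,m}" "d \<in> {l,m}" using h(2,3) e2 vj by auto
  have c1: "(c = l \<and> d = m) \<or> (c = m \<and> d = l)" using cd h(3) by auto
  have c2: "(l < a \<and> a < m \<and> l < b \<and> b < m) \<or> (m < a \<and> a < u \<and> m < b \<and> b < u)"
    using e1 vin(2,3) by auto
  from c1 c2 show False using h(4,5) lm unfolding cyc_def by (elim disjE conjE; linarith)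
qed

lemma G3_noP: "\<forall>e1\<in>G3 l s. \<forall>e2\<in>G3 l s. \<not> Pc e1 e2"
proof (induction s arbitrary: l rule: less_induct)
  case (less s)
  show ?case
  proof (cases "s < 3")
    case True then show ?thesis using G3_small by simp
  next
    case False
    then have s3: "3 \<le> s" by simp
    define m where "m = l + s div 2"
    have lm: "l < m" "m < l + s" unfolding m_def using s3 by auto
    have h1: "s div 2 - 1 < s" "s - s div 2 - 1 < s" using s3 by auto
    define T where "T = (\<lambda>j. {l, m, j}) ` ({l<..<l+s} - {m})"
    define GL where "GL = G3 (l+1) (s div 2 - 1)"
    define GR where "GR = G3 (m + 1) (s - s div 2 - 1)"
    have G: "G3 l s = T \<union> GL \<union> GR" unfolding T_def GL_def GR_def m_def using G3_rec[OF s3] by simp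
    have GLr: "e \<subseteq> {l<..<m}" if "e \<in> GL" for e
    proof -
      have "e \<subseteq> {l+1..<l+1+(s div 2 - 1)}" using G3_range that unfolding GL_def by blast
      moreover have "{l+1..<l+1+(s div 2 - 1)} \<subseteq> {l<..<m}" unfolding m_def by auto
      ultimately show ?thesis by (rule order_trans)
    qed
    have GRr: "e \<subseteq> {m<..<l+s}" if "e \<in> GR" for e
    proof -
      have "e \<subseteq> {m+1..<m+1+(s - s div 2 - 1)}" using G3_range that unfolding GR_def by blast
      moreover have "{m+1..<m+1+(s - s div 2 - 1)} \<subseteq> {m<..<l+s}" unfolding m_def using s3 by auto
      ultimately show ?thesis by (rule order_trans)
    qed
    have IL: "\<not> Pc e1 e2" if "e1 \<in> GL" "e2 \<in> GL" for e1 e2 using less.IH[OF h1(1)] that unfolding GL_def by blast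
    have IR: "\<not> Pc e1 e2" if "e1 \<in> GR" "e2 \<in> GR" for e1 e2
      using less.IH[OF h1(2)] that unfolding GR_def m_def by blast
    have LR: "\<not> Pc e1 e2" if "e1 \<in> GL" "e2 \<in> GR" for e1 e2
    proof
      assume "Pc e1 e2"
      then have "e1 \<inter> e2 \<noteq> {}" by (rule Pc_disj)
      then show False using GLr[OF that(1)] GRr[OF that(2)] by fastforce
    qed
    have RL: "\<not> Pc e1 e2" if "e1 \<in> GR" "e2 \<in> GL" for e1 e2
    proof
      assume "Pc e1 e2"
      then have "e1 \<inter> e2 \<noteq> {}" by (rule Pc_disj)
      then show False using GRr[OF that(1)] GLr[OF that(2)] by fastforce
    qed
    have TT: "\<not> Pc e1 e2" if "e1 \<in> T" "e2 \<in> T" for e1 e2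
    proof
      assume "Pc e1 e2"
      moreover have "l \<in> e1" "m \<in> e1" "l \<in> e2" "m \<in> e2" using that unfolding T_def by auto
      ultimately have "l = m" by (rule Pc_TT)
      then show False using lm by simp
    qed
    have TC: "\<not> Pc e1 e2" if A: "e1 \<in> T" "e2 \<in> GL \<union> GR" for e1 e2
    proof
      assume P: "Pc e1 e2"
      obtain j where j0: "j \<in> {l<..<l+s} - {m}" "e1 = {l,m,j}" using A(1) unfolding T_def by blast
      then have j: "e1 = {l,m,j}" "l < j" "j < l + s" by auto
      have "e2 \<subseteq> {l<..<m} \<or> e2 \<subseteq> {m<..<l+s}" using A(2) GLr GRr by blast
      then show False using Pc_T_child[OF P j(1) lm(1) _ lm(2) j(3) j(2)] by blast
    qed
    have CT: "\<not> Pc e1 e2" if A: "e1 \<in> GL \<union> GR" "e2 \<in> T" for e1 e2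
    proof
      assume P: "Pc e1 e2"
      obtain j where j0: "j \<in> {l<..<l+s} - {m}" "e2 = {l,m,j}" using A(2) unfolding T_def by blast
      then have j: "e2 = {l,m,j}" "l < j" "j < l + s" by auto
      have "e1 \<subseteq> {l<..<m} \<or> e1 \<subseteq> {m<..<l+s}" using A(1) GLr GRr by blast
      then show False using Pc_child_T[OF P j(1) lm(1) _ lm(2) j(3) j(2)] by blast
    qed
    show ?thesis unfolding G using IL IR LR RL TT TC CT by blast
  qed
qed


lemma Suc_n_plus_mod [simp]: "Suc c < n \<Longrightarrow> Suc (n + c) mod n = Suc c"
  by (metis add_Suc_right mod_add_self1 mod_less)

lemma G3_comp:
  assumes "l + s \<le> n" "x < y" "y < z" "l \<le> x" "z < l + s"
    "{x,y,z} \<notin> G3 l s" "{x,y,z} \<notin> B3 l s"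
  shows "contains_copy n (insert {x,y,z} (G3 l s)) 5 S3"
  using assms
proof (induction s arbitrary: l x y z rule: less_induct)
  case (less s)
  note ls = less.prems(1) and xyz = less.prems(2-5) and nG = less.prems(6) and nB = less.prems(7)
  have s3: "3 \<le> s" using xyz by linarith
  define m where "m = l + s div 2"
  have lm: "l < m" "m < l + s" unfolding m_def using s3 by auto
  have ln: "l < n" "m < n" using ls lm by auto
  have top: "{l, m, j} \<in> G3 l s" if "l < j" "j < l + s" "j \<noteq> m" for j
    using G3_top[OF s3 that(1,2)] that(3) unfolding m_def by simp
  consider "l < x" "z < m" | "m < x" | "x = l" | "l < x" "x \<le> m" "m \<le> z" using xyz by linarith
  then show ?case
  proof cases
    case 1
    define s' where "s' = s div 2 - 1"
    have lt: "s' < s" unfolding s'_def using s3 by simp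
    have "contains_copy n (insert {x,y,z} (G3 (l+1) s')) 5 S3"
    proof (rule less.IH[OF lt])
      show "l + 1 + s' \<le> n" unfolding s'_def using ls s3 by linarith
      show "l + 1 \<le> x" using 1 by simp
      show "z < l + 1 + s'" unfolding s'_def using 1 s3 unfolding m_def by linarith
      show "{x,y,z} \<notin> G3 (l+1) s'" using nG G3_left[OF s3] unfolding s'_def by blast
      show "{x,y,z} \<notin> B3 (l+1) s'" using nB B3_left[OF s3] unfolding s'_def by blast
    qed (use xyz in auto)
    then show ?thesis by (rule copy_mono) (use G3_left[OF s3] s'_def in auto)
  next
    case 2
    define s' where "s' = s - s div 2 - 1"
    have lt: "s' < s" unfolding s'_def using s3 by simp
    have "contains_copy n (insert {x,y,z} (G3 (l + s div 2 + 1) s')) 5 S3"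
    proof (rule less.IH[OF lt])
      show "l + s div 2 + 1 + s' \<le> n" unfolding s'_def using ls s3 by linarith
      show "l + s div 2 + 1 \<le> x" using 2 unfolding m_def by simp
      show "z < l + s div 2 + 1 + s'" unfolding s'_def using xyz s3 by linarith
      show "{x,y,z} \<notin> G3 (l + s div 2 + 1) s'" using nG G3_right[OF s3] unfolding s'_def by blast
      show "{x,y,z} \<notin> B3 (l + s div 2 + 1) s'" using nB B3_right[OF s3] unfolding s'_def by blast
    qed (use xyz in auto)
    then show ?thesis by (rule copy_mono) (use G3_right[OF s3] s'_def in auto)
  next
    case 3
    have ym: "y \<noteq> m"
    proof
      assume "y = m" then have "{x,y,z} \<in> G3 l s" using top[of z] 3 xyz by (auto simp: insert_commute)
      then show False using nG by blast
    qed
    have zm: "z \<noteq> m"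
    proof
      assume "z = m" then have "{x,y,z} \<in> G3 l s" using top[of y] 3 xyz by (auto simp: insert_commute)
      then show False using nG by blast
    qed
    consider "y < m" "m < z" | "z < m" | "m < y" using ym zm xyz by linarith
    then show ?thesis
    proof cases
      case 1
      show ?thesis
      proof (cases "z + 1 < l + s")
        case True
        have "{l, m, z+1} \<in> G3 l s" using top[of "z+1"] True 1 xyz by simp
        then show ?thesis
          by (intro copy_list[where xs="[l,y,m,z,z+1]"]) (use True 1 3 xyz ln ls in \<open>auto simp: S3_def insert_commute\<close>)
      next
        case False
        then have zr: "z = l + s - 1" using xyz by linarith
        show ?thesis
        proof (cases "l + 1 < y")
          case True
          have "{l, m, l+1} \<in> G3 l s" using top[of "l+1"] True 1 xyz by simp
          then show ?thesis
            by (intro copy_list[where xs="[l,l+1,y,m,z]"]) (use True 1 3 xyz ln ls in \<open>auto simp: S3_def insert_commute\<close>)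
        next
          case False
          then have "y = l + 1" using xyz 3 by linarith
          then have "{x,y,z} \<in> B3 l s" using B3_c[OF s3, of l] zr 3 by simp
          then show ?thesis using nB by blast
        qed
      qed
    next
      case 2
      show ?thesis
      proof (cases "y + 1 < z")
        case True
        have "{l, m, y+1} \<in> G3 l s" using top[of "y+1"] True 2 xyz 3 by simp
        then show ?thesis
          by (intro copy_list[where xs="[l,y,y+1,z,m]"]) (use True 2 3 xyz ln ls lm in \<open>auto simp: S3_def insert_commute\<close>)
      next
        case False
        then have "z = y + 1" using xyz by linarith
        then have "{x,y,z} \<in> B3 l s" using B3_a[OF s3, of l y] 3 xyz by simp
        then show ?thesis using nB by blast
      qed
    next
      case 4: 3
      show ?thesis
      proof (cases "y + 1 < z")
        case True
        have "{l, m, y+1} \<in> G3 l s" using top[of "y+1"] True 4 xyz 3 by simp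
        then show ?thesis
          by (intro copy_list[where xs="[l,m,y,y+1,z]"]) (use True 4 3 xyz ln ls lm in \<open>auto simp: S3_def insert_commute\<close>)
      next
        case False
        then have "z = y + 1" using xyz by linarith
        then have "{x,y,z} \<in> B3 l s" using B3_a[OF s3, of l y] 3 xyz by simp
        then show ?thesis using nB by blast
      qed
    qed
  next
    case 4
    consider "x = m" | "z = m" | "y = m" | "x < m" "m < z" "y \<noteq> m" using 4 xyz by linarith
    then show ?thesis
    proof cases
      case 1
      show ?thesis
      proof (cases "y + 1 < z")
        case True
        have "{l, m, y+1} \<in> G3 l s" using top[of "y+1"] True 1 xyz lm by simp
        then show ?thesis
          by (intro copy_list[where xs="[m,y,y+1,z,n+l]"]) (use True 1 4 xyz ln ls lm in \<open>auto simp: S3_def insert_commute\<close>)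
      next
        case False
        then have "z = y + 1" using xyz by linarith
        then have "{x,y,z} \<in> B3 l s" using B3_b[OF s3, of l y] 1 xyz unfolding m_def by simp
        then show ?thesis using nB by blast
      qed
    next
      case 2
      show ?thesis
      proof (cases "x + 1 < y")
        case True
        have "{l, m, x+1} \<in> G3 l s" using top[of "x+1"] True 2 xyz 4 by simp
        then show ?thesis
          by (intro copy_list[where xs="[m,n+l,n+x,n+x+1,n+y]"]) (use True 2 4 xyz ln ls lm in \<open>auto simp: S3_def insert_commute\<close>)
      next
        case False
        then have "y = x + 1" using xyz by linarith
        then have "{x,y,z} \<in> B3 l s" using B3_b[OF s3, of l x] 2 4 xyz unfolding m_def by (simp add: insert_commute)
        then show ?thesis using nB by blast
      qed
    next
      case 3
      show ?thesis
      proof (cases "m + 1 < z")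
        case True
        have "{l, m, m+1} \<in> G3 l s" using top[of "m+1"] True 3 xyz lm by simp
        then show ?thesis
          by (intro copy_list[where xs="[m,m+1,z,n+l,n+x]"]) (use True 3 4 xyz ln ls lm in \<open>auto simp: S3_def insert_commute\<close>)
      next
        case False
        then have z: "z = m + 1" using xyz 3 by linarith
        show ?thesis
        proof (cases "x + 1 < m")
          case True
          obtain p where p: "m = Suc p" using lm by (cases m) auto
          have "{l, m, p} \<in> G3 l s" using top[of p] True 4 lm p by simp
          then show ?thesis
            by (intro copy_list[where xs="[m,z,n+l,n+x,n+p]"]) (use True 3 4 z p xyz ln ls lm in \<open>auto simp: S3_def insert_commute\<close>)
        next
          case False
          then have "x = m - 1" using xyz 3 by linarith
          then have "{x,y,z} \<in> B3 l s" using B3_d[OF s3, of l] 3 z lm unfolding m_def by simp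
          then show ?thesis using nB by blast
        qed
      qed
    next
      case 5: 4
      show ?thesis
      proof (cases "y < m")
        case True
        have "{l, m, y} \<in> G3 l s" using top[of y] True 4 xyz by simp
        then show ?thesis
          by (intro copy_list[where xs="[y,m,z,n+l,n+x]"]) (use True 5 4 xyz ln ls lm in \<open>auto simp: S3_def insert_commute\<close>)
      next
        case False
        then have ym: "m < y" using 5 by simp
        have "{l, m, y} \<in> G3 l s" using top[of y] ym 4 xyz lm by simp
        then show ?thesis
          by (intro copy_list[where xs="[y,z,n+l,n+x,n+m]"]) (use ym 5 4 xyz ln ls lm in \<open>auto simp: S3_def insert_commute\<close>)
      qed
    qed
  qed
qed


lemma G3_card3: "e \<in> G3 l s \<Longrightarrow> card e = 3"
proof (induction s arbitrary: l e rule: less_induct)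
  case (less s)
  show ?case
  proof (cases "s < 3")
    case True then show ?thesis using less.prems G3_small by simp
  next
    case False
    then have s3: "3 \<le> s" by simp
    have h1: "s div 2 - 1 < s" "s - s div 2 - 1 < s" using s3 by auto
    from less.prems[unfolded G3_rec[OF s3]] consider
      j where "e = {l, l + s div 2, j}" "j \<in> {l<..<l+s} - {l + s div 2}"
      | "e \<in> G3 (l+1) (s div 2 - 1)" | "e \<in> G3 (l + s div 2 + 1) (s - s div 2 - 1)" by blast
    then show ?thesis
    proof cases
      case 1 then show ?thesis using s3 by auto
    next
      case 2 then show ?thesis using less.IH[OF h1(1) 2] by simp
    next
      case 3 then show ?thesis using less.IH[OF h1(2) 3] by simp
    qed
  qed
qed

lemma B3_finite: "finite (B3 l s)"
proof (induction s arbitrary: l rule: less_induct)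
  case (less s)
  show ?case
  proof (cases "s < 3")
    case True then show ?thesis using B3_small by simp
  next
    case False
    then have s3: "3 \<le> s" by simp
    have h1: "s div 2 - 1 < s" "s - s div 2 - 1 < s" using s3 by auto
    show ?thesis unfolding B3_rec[OF s3] using less.IH[OF h1(1)] less.IH[OF h1(2)] by simp
  qed
qed

lemma S3_upper:
  assumes n: "6 \<le> n" and k: "n < 2 ^ k"
  shows "sat_cyc n 5 S3 \<le> 5 * n * k"
proof -
  define G where "G = G3 0 n"
  define S where "S = B3 0 n"
  have G1: "G \<subseteq> triples n"
  proof
    fix e assume "e \<in> G"
    then show "e \<in> triples n" unfolding triples_def G_def using G3_range[of e 0 n] G3_card3[of e 0 n] by auto
  qed
  have G2: "\<not> contains_copy n G 5 S3"
    using S3_copy_P G3_noP unfolding G_def by blast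
  have G3: "\<forall>e\<in>triples n - (G \<union> S). contains_copy n (insert e G) 5 S3"
  proof
    fix e assume e: "e \<in> triples n - (G \<union> S)"
    then have et: "e \<in> triples n" and eG: "e \<notin> G" and eS: "e \<notin> S" by blast+
    obtain x y z where xyz: "x < y" "y < z" "z < n" "e = {x,y,z}"
      using triple_sorted[OF et] by blast
    show "contains_copy n (insert e G) 5 S3" unfolding G_def xyz(4)
      by (rule G3_comp) (use xyz eG eS in \<open>auto simp: G_def S_def\<close>)
  qed
  have cb: "card (G3 0 n) \<le> n * k \<and> card (B3 0 n) \<le> 4 * n * k" using card_bounds[OF k] .
  have fS: "finite S" unfolding S_def by (rule B3_finite)
  have "card (S \<inter> triples n) \<le> card S" by (rule card_S_le[OF fS])
  then show ?thesis using sat_upper[OF G1 G2 G3] cb unfolding G_def S_def by linarith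
qed


lemma sat_exists: "F \<noteq> {} \<Longrightarrow> \<exists>H. saturated n k F H"
proof -
  assume F: "F \<noteq> {}"
  have e: "\<not> contains_copy n {} k F" using F unfolding contains_copy_def by auto
  show ?thesis using sat_exists_le[of "{}" n k F "triples n"] e by auto
qed

lemma lower_all: "F \<noteq> {} \<Longrightarrow> (\<And>H. saturated n k F H \<Longrightarrow> P (card H)) \<Longrightarrow> P (sat_cyc n k F)"
proof -
  assume F: "F \<noteq> {}" and h: "\<And>H. saturated n k F H \<Longrightarrow> P (card H)"
  obtain H0 where "saturated n k F H0" using sat_exists[OF F] by blast
  then obtain H' where H': "saturated n k F H'" "sat_cyc n k F = card H'" using sat_attained by blast
  show ?thesis using h[OF H'(1)] H'(2) by simp
qed

lemma ev_at_top: "\<forall>n\<ge>(N::nat). P n \<Longrightarrow> eventually P at_top"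
  by (rule eventually_sequentiallyI[of N]) simp

lemma theta_gen:
  fixes f g :: "nat \<Rightarrow> real"
  assumes A: "\<forall>n\<ge>N. f n \<le> ca * g n" "\<forall>n\<ge>N. cb * g n \<le> f n" "0 < cb" "\<forall>n. 0 \<le> f n" "\<forall>n. 0 \<le> g n"
  shows "f \<in> \<Theta>(g)"
proof (rule bigthetaI)
  have "\<forall>n\<ge>N. norm (f n) \<le> ca * norm (g n)" using A(1,4,5) by simp
  then show "f \<in> O(g)" by (intro bigoI[where c=ca] ev_at_top)
  have "\<forall>n\<ge>N. cb * norm (g n) \<le> norm (f n)" using A(2,4,5) by simp
  then show "f \<in> \<Omega>(g)" by (intro landau_omega.bigI[OF A(3)] ev_at_top)
qed

lemma omega_gen:
  fixes f g :: "nat \<Rightarrow> real"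
  assumes A: "\<forall>n\<ge>N. cb * g n \<le> f n" "0 < cb" "\<forall>n. 0 \<le> f n" "\<forall>n. 0 \<le> g n"
  shows "f \<in> \<Omega>(g)"
proof -
  have "\<forall>n\<ge>N. cb * norm (g n) \<le> norm (f n)" using A(1,3,4) by simp
  then show "f \<in> \<Omega>(g)" by (intro landau_omega.bigI[OF A(2)] ev_at_top)
qed

lemma bigo_gen:
  fixes f g :: "nat \<Rightarrow> real"
  assumes A: "\<forall>n\<ge>N. f n \<le> ca * g n" "\<forall>n. 0 \<le> f n" "\<forall>n\<ge>N. 0 \<le> g n"
  shows "f \<in> O(g)"
proof -
  have "\<forall>n\<ge>N. norm (f n) \<le> ca * norm (g n)"
  proof (intro allI impI)
    fix n :: nat assume "N \<le> n"
    then show "norm (f n) \<le> ca * norm (g n)" using A by simp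
  qed
  then show "f \<in> O(g)" by (intro bigoI[where c=ca] ev_at_top)
qed

lemma facts_ne: "M1 \<noteq> {}" "M2 \<noteq> {}" "M3 \<noteq> {}" "S1 \<noteq> {}" "S2 \<noteq> {}" "S3 \<noteq> {}" "D1 \<noteq> {}" "D2 \<noteq> {}"
  unfolding M1_def M2_def M3_def S1_def S2_def S3_def D1_def D2_def by simp_all

lemma S1_facts: "S1 = {{0,1,2},{0,3,4}}" "(0::nat) \<in> {0,1,2}" "(0::nat) \<in> {0,3,4}" "{0::nat,1,2} \<noteq> {0,3,4}" "{0::nat,1,2} \<subseteq> {..<5}" "{0::nat,3,4} \<subseteq> {..<5}"
proof -
  have "{0::nat,1,2} \<noteq> {0,3,4}" by (rule set_ne_wit[of 1]) auto
  then show "S1 = {{0,1,2},{0,3,4}}" "(0::nat) \<in> {0,1,2}" "(0::nat) \<in> {0,3,4}" "{0::nat,1,2} \<noteq> {0,3,4}" "{0::nat,1,2} \<subseteq> {..<5}" "{0::nat,3,4} \<subseteq> {..<5}"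
    by (simp_all add: S1_def)
qed
lemma S2_facts: "S2 = {{0,1,4},{0,2,3}}" "(0::nat) \<in> {0,1,4}" "(0::nat) \<in> {0,2,3}" "{0::nat,1,4} \<noteq> {0,2,3}" "{0::nat,1,4} \<subseteq> {..<5}" "{0::nat,2,3} \<subseteq> {..<5}"
proof -
  have "{0::nat,1,4} \<noteq> {0,2,3}" by (rule set_ne_wit[of 1]) auto
  then show "S2 = {{0,1,4},{0,2,3}}" "(0::nat) \<in> {0,1,4}" "(0::nat) \<in> {0,2,3}" "{0::nat,1,4} \<noteq> {0,2,3}" "{0::nat,1,4} \<subseteq> {..<5}" "{0::nat,2,3} \<subseteq> {..<5}"
    by (simp_all add: S2_def)
qed
lemma S3_facts: "S3 = {{0,1,3},{0,2,4}}" "(0::nat) \<in> {0,1,3}" "(0::nat) \<in> {0,2,4}" "{0::nat,1,3} \<noteq> {0,2,4}" "{0::nat,1,3} \<subseteq> {..<5}" "{0::nat,2,4} \<subseteq> {..<5}"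
proof -
  have "{0::nat,1,3} \<noteq> {0,2,4}" by (rule set_ne_wit[of 1]) auto
  then show "S3 = {{0,1,3},{0,2,4}}" "(0::nat) \<in> {0,1,3}" "(0::nat) \<in> {0,2,4}" "{0::nat,1,3} \<noteq> {0,2,4}" "{0::nat,1,3} \<subseteq> {..<5}" "{0::nat,2,4} \<subseteq> {..<5}"
    by (simp_all add: S3_def)
qed
lemma D1_facts: "D1 = {{0,1,2},{0,2,3}}" "{0::nat,1,2} \<noteq> {0,2,3}" "{0::nat,1,2} \<subseteq> {..<4}" "{0::nat,2,3} \<subseteq> {..<4}"
   "(0::nat) \<in> {0,1,2}" "(0::nat) \<in> {0,2,3}" "(2::nat) \<in> {0,1,2}" "(2::nat) \<in> {0,2,3}" "(0::nat) \<noteq> 2"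
proof -
  have "{0::nat,1,2} \<noteq> {0,2,3}" by (rule set_ne_wit[of 1]) auto
  then show "D1 = {{0,1,2},{0,2,3}}" "{0::nat,1,2} \<noteq> {0,2,3}" "{0::nat,1,2} \<subseteq> {..<4}" "{0::nat,2,3} \<subseteq> {..<4}"
   "(0::nat) \<in> {0,1,2}" "(0::nat) \<in> {0,2,3}" "(2::nat) \<in> {0,1,2}" "(2::nat) \<in> {0,2,3}" "(0::nat) \<noteq> 2"
    by (simp_all add: D1_def)
qed
lemma D2_facts: "D2 = {{0,1,2},{0,1,3}}" "{0::nat,1,2} \<noteq> {0,1,3}" "{0::nat,1,2} \<subseteq> {..<4}" "{0::nat,1,3} \<subseteq> {..<4}"
   "(0::nat) \<in> {0,1,2}" "(0::nat) \<in> {0,1,3}" "(1::nat) \<in> {0,1,2}" "(1::nat) \<in> {0,1,3}" "(0::nat) \<noteq> 1"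
proof -
  have "{0::nat,1,2} \<noteq> {0,1,3}" by (rule set_ne_wit[of 2]) auto
  then show "D2 = {{0,1,2},{0,1,3}}" "{0::nat,1,2} \<noteq> {0,1,3}" "{0::nat,1,2} \<subseteq> {..<4}" "{0::nat,1,3} \<subseteq> {..<4}"
   "(0::nat) \<in> {0,1,2}" "(0::nat) \<in> {0,1,3}" "(1::nat) \<in> {0,1,2}" "(1::nat) \<in> {0,1,3}" "(0::nat) \<noteq> 1"
    by (simp_all add: D2_def)
qed

lemma shared_sat_lower:
  assumes "F = {ea, eb}" "v \<in> ea" "v \<in> eb" "ea \<noteq> eb" "ea \<subseteq> {..<k}" "eb \<subseteq> {..<k}" "6 \<le> n"
  shows "real n \<le> 4 * real (sat_cyc n k F)"
proof -
  have "n \<le> 3 * sat_cyc n k F + 2"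
  proof (rule lower_all[where P="\<lambda>x. n \<le> 3 * x + 2"])
    show "F \<noteq> {}" using assms(1) by simp
  qed (rule shared_lower[OF assms(1-6)])
  then have "n \<le> 4 * sat_cyc n k F" using assms(7) by linarith
  then have "real n \<le> real (4 * sat_cyc n k F)" by (rule of_nat_mono)
  then show ?thesis by simp
qed

lemma lin_theta:
  assumes up: "\<And>n. 6 \<le> n \<Longrightarrow> f n \<le> 3 * n + (n + 2)" and lo: "\<And>n. 6 \<le> n \<Longrightarrow> real n \<le> 12 * real (f n)"
  shows "(\<lambda>n. real (f n)) \<in> \<Theta>(\<lambda>n. real n)"
proof (rule theta_gen[where N=6 and ca=5 and cb="1/12"])
  show "\<forall>n\<ge>6. real (f n) \<le> 5 * real n"
  proof (intro allI impI)
    fix n :: nat assume "6 \<le> n" then have "f n \<le> 5 * n" using up[of n] by linarith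
    then show "real (f n) \<le> 5 * real n" by linarith
  qed
  show "\<forall>n\<ge>6. 1/12 * real n \<le> real (f n)"
  proof (intro allI impI)
    fix n :: nat assume "6 \<le> n"
    then have "real n \<le> 12 * real (f n)" by (rule lo)
    then show "1/12 * real n \<le> real (f n)" by linarith
  qed
qed auto

lemma sq_theta:
  assumes up: "\<And>n. 8 \<le> n \<Longrightarrow> f n \<le> 2 * (n * n)" and lo: "\<And>n. 8 \<le> n \<Longrightarrow> n * n \<le> 200 * f n"
  shows "(\<lambda>n. real (f n)) \<in> \<Theta>(\<lambda>n. real n ^ 2)"
proof (rule theta_gen[where N=8 and ca=2 and cb="1/200"])
  show "\<forall>n\<ge>8. real (f n) \<le> 2 * real n ^ 2"
  proof (intro allI impI)
    fix n :: nat assume "8 \<le> n" then have "f n \<le> 2 * (n * n)" using up[of n] by linarith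
    then have "real (f n) \<le> real (2 * (n * n))" by linarith
    then show "real (f n) \<le> 2 * real n ^ 2" by (simp add: power2_eq_square)
  qed
  show "\<forall>n\<ge>8. 1/200 * real n ^ 2 \<le> real (f n)"
  proof (intro allI impI)
    fix n :: nat assume "8 \<le> n" then have "n * n \<le> 200 * f n" using lo[of n] by linarith
    then have "real (n * n) \<le> real (200 * f n)" by linarith
    then show "1/200 * real n ^ 2 \<le> real (f n)" by (simp add: power2_eq_square)
  qed
qed auto

theorem theorem1p2:
  shows "(\<lambda>n. real (sat_cyc n 6 M2)) \<in> \<Theta>(\<lambda>n. real n) \<and>
    (\<lambda>n. real (sat_cyc n 5 S1)) \<in> \<Theta>(\<lambda>n. real n) \<and>
    (\<lambda>n. real (sat_cyc n 5 S2)) \<in> \<Theta>(\<lambda>n. real n) \<and>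
    (\<lambda>n. real (sat_cyc n 6 M1)) \<in> \<Theta>(\<lambda>n. real n ^ 2) \<and>
    (\<lambda>n. real (sat_cyc n 6 M3)) \<in> \<Theta>(\<lambda>n. real n ^ 2) \<and>
    (\<lambda>n. real (sat_cyc n 4 D1)) \<in> \<Theta>(\<lambda>n. real n ^ 2) \<and>
    (\<lambda>n. real (sat_cyc n 4 D2)) \<in> \<Theta>(\<lambda>n. real n ^ 2) \<and>
    (\<lambda>n. real (sat_cyc n 5 S3)) \<in> \<Omega>(\<lambda>n. real n) \<and>
    (\<lambda>n. real (sat_cyc n 5 S3)) \<in> O(\<lambda>n. real n * log 2 (real n))"
proof (intro conjI)
  show "(\<lambda>n. real (sat_cyc n 6 M2)) \<in> \<Theta>(\<lambda>n. real n)"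
  proof (rule lin_theta)
    fix n :: nat assume n: "6 \<le> n"
    show "sat_cyc n 6 M2 \<le> 3 * n + (n + 2)" by (rule M2_upper[OF n])
    have a: "n div 3 \<le> 3 * sat_cyc n 6 M2" by (rule lower_all[OF facts_ne(2), where P="\<lambda>x. n div 3 \<le> 3 * x"]) (rule M2_lower)
    have "n \<le> 3 * (n div 3) + 2" by linarith
    moreover have "2 \<le> n div 3" using n by linarith
    ultimately have "n \<le> 12 * sat_cyc n 6 M2" using a by linarith
    then show "real n \<le> 12 * real (sat_cyc n 6 M2)" by linarith
  qed
  show "(\<lambda>n. real (sat_cyc n 5 S1)) \<in> \<Theta>(\<lambda>n. real n)"
  proof (rule lin_theta)
    fix n :: nat assume n: "6 \<le> n"
    show "sat_cyc n 5 S1 \<le> 3 * n + (n + 2)" using S1_upper[OF n] by linarith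
    show "real n \<le> 12 * real (sat_cyc n 5 S1)" using shared_sat_lower[OF S1_facts n] by linarith
  qed
  show "(\<lambda>n. real (sat_cyc n 5 S2)) \<in> \<Theta>(\<lambda>n. real n)"
  proof (rule lin_theta)
    fix n :: nat assume n: "6 \<le> n"
    show "sat_cyc n 5 S2 \<le> 3 * n + (n + 2)" using S2_upper[OF n] by linarith
    show "real n \<le> 12 * real (sat_cyc n 5 S2)" using shared_sat_lower[OF S2_facts n] by linarith
  qed
  show "(\<lambda>n. real (sat_cyc n 6 M1)) \<in> \<Theta>(\<lambda>n. real n ^ 2)"
  proof (rule sq_theta)
    fix n :: nat assume n: "8 \<le> n"
    have "3 * n \<le> n * n" using n by simp
    then show "sat_cyc n 6 M1 \<le> 2 * (n * n)" using M1_upper[of n] n by linarith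
    have a: "n choose 2 \<le> 3 * sat_cyc n 6 M1"
      by (rule lower_all[OF facts_ne(1), where P="\<lambda>x. n choose 2 \<le> 3 * x"]) (rule M1_lower, use n in auto)
    have ev: "even (n * (n - 1))" by (cases n) simp_all
    have "n * (n - 1) = 2 * (n choose 2)" unfolding choose_two using ev by simp
    moreover have "n * n \<le> 2 * (n * (n - 1))"
    proof -
      have "n \<le> 2 * (n - 1)" using n by linarith
      then show ?thesis using mult_le_mono2[of n "2 * (n - 1)" n] by (simp add: algebra_simps)
    qed
    ultimately show "n * n \<le> 200 * sat_cyc n 6 M1" using a by linarith
  qed
  show "(\<lambda>n. real (sat_cyc n 6 M3)) \<in> \<Theta>(\<lambda>n. real n ^ 2)"
  proof (rule sq_theta)
    fix n :: nat assume n: "8 \<le> n"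
    show "sat_cyc n 6 M3 \<le> 2 * (n * n)" using M3_upper[of n] n by linarith
    have a: "(n div 2) * (n - n div 2 - 1) \<le> sat_cyc n 6 M3"
      by (rule lower_all[OF facts_ne(3), where P="\<lambda>x. (n div 2) * (n - n div 2 - 1) \<le> x"]) (rule M3_lower)
    have b1: "n \<le> 4 * (n div 2)" "n \<le> 4 * (n - n div 2 - 1)" using n by linarith+
    have "n * n \<le> (4 * (n div 2)) * (4 * (n - n div 2 - 1))" using mult_le_mono[OF b1] .
    then have "n * n \<le> 16 * ((n div 2) * (n - n div 2 - 1))" by (simp add: algebra_simps)
    then show "n * n \<le> 200 * sat_cyc n 6 M3" using a by linarith
  qed
  show "(\<lambda>n. real (sat_cyc n 4 D1)) \<in> \<Theta>(\<lambda>n. real n ^ 2)"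
  proof (rule sq_theta)
    fix n :: nat assume n: "8 \<le> n"
    show "sat_cyc n 4 D1 \<le> 2 * (n * n)" using D1_upper[of n] n by linarith
    show "n * n \<le> 200 * sat_cyc n 4 D1"
      by (rule lower_all[OF facts_ne(7), where P="\<lambda>x. n * n \<le> 200 * x"]) (rule pair_lower_final[OF D1_facts(1-8) D1_facts(9) _ n])
  qed
  show "(\<lambda>n. real (sat_cyc n 4 D2)) \<in> \<Theta>(\<lambda>n. real n ^ 2)"
  proof (rule sq_theta)
    fix n :: nat assume n: "8 \<le> n"
    show "sat_cyc n 4 D2 \<le> 2 * (n * n)" using D2_upper[of n] by linarith
    show "n * n \<le> 200 * sat_cyc n 4 D2"
      by (rule lower_all[OF facts_ne(8), where P="\<lambda>x. n * n \<le> 200 * x"]) (rule pair_lower_final[OF D2_facts(1-8) D2_facts(9) _ n])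
  qed
  show "(\<lambda>n. real (sat_cyc n 5 S3)) \<in> \<Omega>(\<lambda>n. real n)"
  proof (rule omega_gen[where N=6 and cb="1/4"])
    show "\<forall>n\<ge>6. 1/4 * real n \<le> real (sat_cyc n 5 S3)"
    proof (intro allI impI)
      fix n :: nat assume "6 \<le> n"
      then have "real n \<le> 4 * real (sat_cyc n 5 S3)" by (rule shared_sat_lower[OF S3_facts])
      then show "1/4 * real n \<le> real (sat_cyc n 5 S3)" by linarith
    qed
  qed auto
  show "(\<lambda>n. real (sat_cyc n 5 S3)) \<in> O(\<lambda>n. real n * log 2 (real n))"
  proof (rule bigo_gen[where N=6 and ca=10])
    show "\<forall>n\<ge>6. real (sat_cyc n 5 S3) \<le> 10 * (real n * log 2 (real n))"
    proof (intro allI impI)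
      fix n :: nat assume n: "6 \<le> n"
      define k where "k = ceillog2 n + 1"
      have p0: "0 < (2::nat) ^ ceillog2 n" by simp
      have p1: "(2::nat) ^ k = 2 * 2 ^ ceillog2 n" unfolding k_def by simp
      have nk: "n < 2 ^ k" using le_two_power_ceillog2[of n] p0 p1 by linarith
      have "sat_cyc n 5 S3 \<le> 5 * n * k" by (rule S3_upper[OF n nk])
      then have a: "real (sat_cyc n 5 S3) \<le> 5 * real n * real k" by (metis of_nat_le_iff of_nat_mult of_nat_numeral)
      have "real (ceillog2 n) < log 2 (real n) + 1" using ceillog2_less_log[of n] n by simp
      then have kl: "real k < log 2 (real n) + 2" unfolding k_def by simp
      have "log 2 (real n) \<ge> log 2 4" using n by (intro log_le_cancel_iff[THEN iffD2]) auto
      moreover have "log 2 (4::real) = 2"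
        by (metis log2_of_power_eq numeral_Bit0 numeral_One power2_eq_square mult_2 one_add_one
            of_nat_numeral numeral_2_eq_2 power_one_right)
      ultimately have l2: "log 2 (real n) \<ge> 2" by simp
      have "5 * real n * real k \<le> 5 * real n * (2 * log 2 (real n))"
        using kl l2 by (intro mult_left_mono) auto
      also have "\<dots> = 10 * (real n * log 2 (real n))" by simp
      finally show "real (sat_cyc n 5 S3) \<le> 10 * (real n * log 2 (real n))" using a by linarith
    qed
    show "\<forall>n\<ge>6. 0 \<le> real n * log 2 (real n)"
    proof (intro allI impI)
      fix n :: nat assume "6 \<le> n"
      then have "0 \<le> log 2 (real n)" by simp
      then show "0 \<le> real n * log 2 (real n)" by simp
    qed
  qed auto
qed

end
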